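(* Let $A$ be a closed densely defined operator in $\mathcal H$ and $G$ a bounded metric operator on $\mathcal H$ (with $G^{-1}$ possibly unbounded). Consider the conditions: (i) $GD(A)=D(A^* )$ and $A^*G\xi=GA\xi$ for every $\xi\in D(A)$ (in particular $A\dashv A^*$ with intertwining operator $G$); (ii) $G^{1/2}AG^{-1/2}$, with domain $G^{1/2}D(A)$, is self-adjoint in $\mathcal H$; (iii) $A$ is self-adjoint in $\mathcal H(G)$ (so $A$ is quasi-self-adjoint); (iv) $GD(A)=D(G^{-1}A^* )$ and $A^*G\xi=GA\xi$ for every $\xi\in D(A)$. Then (i) $\Rightarrow$ (ii) $\Rightarrow$ (iii) $\Rightarrow$ (iv). If moreover the range of $A^*$ is contained in $D(G^{-1})$, then (i)–(iv) are equivalent.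
   Context: A metric operator on a Hilbert space $\mathcal H$ is a self-adjoint operator $G$ with $\langle G\xi,\xi\rangle>0$ for all nonzero $\xi\in D(G)$. For bounded $G$, $\mathcal H(G)$ is the completion of $\mathcal H$ in the norm $\|\xi\|_G=\|G^{1/2}\xi\|$ with inner product $\langle\xi,\eta\rangle_G=\langle G\xi,\eta\rangle$; "$A$ self-adjoint in $\mathcal H(G)$" means $A$, with domain $D(A)$, equals its adjoint $A^\#$ computed in $\mathcal H(G)$. A closed densely defined $A$ is called quasi-self-adjoint if there is a bounded metric operator $G$ such that $A$ is self-adjoint in $\mathcal H(G)$. $D(G^{-1}A^* )=\{\zeta\in D(A^* ): A^*\zeta\in D(G^{-1})\}$. $A\dashv B$ means there is an injective closed densely defined operator $T$ with densely defined inverse such that $D(A)\subset D(T)$, $AD(A)\subset D(T)$, $TD(A)\subset D(B)$ and $BT\xi=TA\xi$ for $\xi\in D(A)$. *)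

theory Defs
  imports "HOL-Analysis.Analysis"
begin

class complex_vector = real_vector +
  fixes scaleC :: "complex \<Rightarrow> 'a \<Rightarrow> 'a" (infixr \<open>*\<^sub>C\<close> 75)
  assumes scaleC_add_right: "a *\<^sub>C (x + y) = a *\<^sub>C x + a *\<^sub>C y"
    and scaleC_add_left: "(a + b) *\<^sub>C x = a *\<^sub>C x + b *\<^sub>C x"
    and scaleC_scaleC: "a *\<^sub>C (b *\<^sub>C x) = (a * b) *\<^sub>C x"
    and scaleC_one: "1 *\<^sub>C x = x"
    and scaleR_scaleC: "scaleR r x = (complex_of_real r) *\<^sub>C x"

class complex_inner = complex_vector + real_normed_vector +
  fixes cinner :: "'a \<Rightarrow> 'a \<Rightarrow> complex"
  assumes cinner_commute: "cinner x y = cnj (cinner y x)"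
    and cinner_add_left: "cinner (x + y) z = cinner x z + cinner y z"
    and cinner_scaleC_left: "cinner (r *\<^sub>C x) y = r * cinner x y"
    and cinner_self_nonneg: "Im (cinner x x) = 0 \<and> 0 \<le> Re (cinner x x)"
    and cinner_eq_zero_iff: "cinner x x = 0 \<longleftrightarrow> x = 0"
    and norm_eq_sqrt_cinner: "norm x = sqrt (Re (cinner x x))"

class chilbert_space = complex_inner + complete_space

definition lin_op :: "'a::complex_vector set \<Rightarrow> ('a \<Rightarrow> 'a) \<Rightarrow> bool" where
  "lin_op D A \<longleftrightarrow> 0 \<in> D
     \<and> (\<forall>x\<in>D. \<forall>y\<in>D. x + y \<in> D \<and> A (x + y) = A x + A y)
     \<and> (\<forall>c. \<forall>x\<in>D. c *\<^sub>C x \<in> D \<and> A (c *\<^sub>C x) = c *\<^sub>C A x)"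

definition densely_defined :: "'a::chilbert_space set \<Rightarrow> ('a \<Rightarrow> 'a) \<Rightarrow> bool" where
  "densely_defined D A \<longleftrightarrow> lin_op D A \<and> closure D = UNIV"

definition closed_op :: "'a::chilbert_space set \<Rightarrow> ('a \<Rightarrow> 'a) \<Rightarrow> bool" where
  "closed_op D A \<longleftrightarrow> lin_op D A \<and> closed {(x, A x) | x. x \<in> D}"

definition adj_dom :: "'a::chilbert_space set \<Rightarrow> ('a \<Rightarrow> 'a) \<Rightarrow> 'a set" where
  "adj_dom D A = {\<eta>. \<exists>\<zeta>. \<forall>\<xi>\<in>D. cinner (A \<xi>) \<eta> = cinner \<xi> \<zeta>}"

definition adj :: "'a::chilbert_space set \<Rightarrow> ('a \<Rightarrow> 'a) \<Rightarrow> 'a \<Rightarrow> 'a" where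
  "adj D A \<eta> = (SOME \<zeta>. \<forall>\<xi>\<in>D. cinner (A \<xi>) \<eta> = cinner \<xi> \<zeta>)"

definition self_adjoint_op :: "'a::chilbert_space set \<Rightarrow> ('a \<Rightarrow> 'a) \<Rightarrow> bool" where
  "self_adjoint_op D A \<longleftrightarrow> densely_defined D A \<and> adj_dom D A = D \<and> (\<forall>\<eta>\<in>D. adj D A \<eta> = A \<eta>)"

definition bounded_clinear_op :: "('a::chilbert_space \<Rightarrow> 'a) \<Rightarrow> bool" where
  "bounded_clinear_op G \<longleftrightarrow> lin_op UNIV G \<and> (\<exists>K. \<forall>x. norm (G x) \<le> norm x * K)"

definition bounded_metric_op :: "('a::chilbert_space \<Rightarrow> 'a) \<Rightarrow> bool" where
  "bounded_metric_op G \<longleftrightarrow> bounded_clinear_op G \<and> self_adjoint_op UNIV G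
     \<and> (\<forall>x. x \<noteq> 0 \<longrightarrow> Im (cinner (G x) x) = 0 \<and> Re (cinner (G x) x) > 0)"

definition op_sqrt :: "('a::chilbert_space \<Rightarrow> 'a) \<Rightarrow> 'a \<Rightarrow> 'a" where
  "op_sqrt G = (THE S. bounded_clinear_op S \<and> self_adjoint_op UNIV S
      \<and> (\<forall>x. Im (cinner (S x) x) = 0 \<and> Re (cinner (S x) x) \<ge> 0) \<and> S \<circ> S = G)"

text \<open>\<open>J\<close> realizes the completion \<open>\<H>(G)\<close> of \<open>\<H>\<close> w.r.t. \<open>\<langle>G\<xi>,\<eta>\<rangle>\<close>:
  a linear map into a Hilbert space, isometric for \<open>\<langle>\<cdot>,\<cdot>\<rangle>_G\<close>, with dense range.\<close>
definition is_G_completion :: "('a::chilbert_space \<Rightarrow> 'a) \<Rightarrow> ('a \<Rightarrow> 'b::chilbert_space) \<Rightarrow> bool" where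
  "is_G_completion G J \<longleftrightarrow> (\<forall>x y. J (x + y) = J x + J y) \<and> (\<forall>c x. J (c *\<^sub>C x) = c *\<^sub>C J x)
     \<and> (\<forall>x y. cinner (J x) (J y) = cinner (G x) y) \<and> closure (range J) = UNIV"

definition cond_i :: "'a::chilbert_space set \<Rightarrow> ('a \<Rightarrow> 'a) \<Rightarrow> ('a \<Rightarrow> 'a) \<Rightarrow> bool" where
  "cond_i D A G \<longleftrightarrow> G ` D = adj_dom D A \<and> (\<forall>\<xi>\<in>D. adj D A (G \<xi>) = G (A \<xi>))"

definition cond_ii :: "'a::chilbert_space set \<Rightarrow> ('a \<Rightarrow> 'a) \<Rightarrow> ('a \<Rightarrow> 'a) \<Rightarrow> bool" where
  "cond_ii D A G \<longleftrightarrow> self_adjoint_op (op_sqrt G ` D) (\<lambda>\<eta>. op_sqrt G (A (inv (op_sqrt G) \<eta>)))"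

text \<open>\<open>A\<close> (with domain \<open>D(A) \<subseteq> \<H> \<subseteq> \<H>(G)\<close>) is self-adjoint in \<open>\<H>(G)\<close>, realized via \<open>J\<close>.\<close>
definition cond_iii :: "'a::chilbert_space set \<Rightarrow> ('a \<Rightarrow> 'a) \<Rightarrow> ('a \<Rightarrow> 'b::chilbert_space) \<Rightarrow> bool" where
  "cond_iii D A J \<longleftrightarrow> self_adjoint_op (J ` D) (\<lambda>k. J (A (inv J k)))"

text \<open>\<open>D(G^{-1}A^*) = {\<zeta> \<in> D(A^*). A^*\<zeta> \<in> D(G^{-1})}\<close>, \<open>D(G^{-1}) = G \<H>\<close>.\<close>
definition cond_iv :: "'a::chilbert_space set \<Rightarrow> ('a \<Rightarrow> 'a) \<Rightarrow> ('a \<Rightarrow> 'a) \<Rightarrow> bool" where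
  "cond_iv D A G \<longleftrightarrow> G ` D = {\<zeta> \<in> adj_dom D A. adj D A \<zeta> \<in> range G}
     \<and> (\<forall>\<xi>\<in>D. adj D A (G \<xi>) = G (A \<xi>))"

end

theory Submission
  imports Defs "HOL-Computational_Algebra.Polynomial"
begin

locale herm_form =
  fixes f :: "'a::complex_vector \<Rightarrow> 'a \<Rightarrow> complex"
  assumes add_left: "f (x + y) z = f x z + f y z"
    and scale_left: "f (c *\<^sub>C x) z = c * f x z"
    and herm: "f x y = cnj (f y x)"
    and psd: "Im (f x x) = 0 \<and> 0 \<le> Re (f x x)"
begin

lemma zero_left[simp]: "f 0 z = 0"
proof -
  have "f 0 z = f 0 z + f 0 z" using add_left[of 0 0 z] by (simp only: add_0_right)
  then show ?thesis by (metis add_cancel_left_right)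
qed

lemma zero_right[simp]: "f z 0 = 0"
  using herm[of z 0] by simp

lemma add_right: "f z (x + y) = f z x + f z y"
proof -
  have "f z (x + y) = cnj (f (x + y) z)" by (rule herm)
  also have "\<dots> = cnj (f x z) + cnj (f y z)" by (simp only: add_left complex_cnj_add)
  also have "\<dots> = f z x + f z y" by (simp only: herm[of z x] herm[of z y])
  finally show ?thesis .
qed

lemma scale_right: "f x (c *\<^sub>C y) = cnj c * f x y"
proof -
  have "f x (c *\<^sub>C y) = cnj (f (c *\<^sub>C y) x)" by (rule herm)
  also have "\<dots> = cnj c * cnj (f y x)" by (simp only: scale_left complex_cnj_mult)
  also have "\<dots> = cnj c * f x y" by (simp only: herm[of x y])
  finally show ?thesis .
qed

lemma minus_left: "f (- x) z = - f x z"
proof -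
  have "f (- x) z + f x z = 0" using add_left[of "-x" x z] by (simp only: add.left_inverse zero_left)
  then show ?thesis by (simp add: eq_neg_iff_add_eq_0)
qed

lemma minus_right: "f z (- x) = - f z x"
proof -
  have "f z (- x) = cnj (f (- x) z)" by (rule herm)
  also have "\<dots> = - cnj (f x z)" by (simp only: minus_left complex_cnj_minus)
  also have "\<dots> = - f z x" by (simp only: herm[of z x])
  finally show ?thesis .
qed

lemma diff_left: "f (x - y) z = f x z - f y z"
  by (simp only: diff_conv_add_uminus add_left minus_left)

lemma diff_right: "f z (x - y) = f z x - f z y"
  by (simp only: diff_conv_add_uminus add_right minus_right)

lemma self_real: "f x x = complex_of_real (Re (f x x))"
  using psd[of x] by (simp add: complex_eq_iff)


lemma expand: "f (x - s *\<^sub>C y) (x - s *\<^sub>C y) = f x x - cnj s * f x y - s * f y x + s * cnj s * f y y"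
proof -
  show ?thesis
    by (simp only: diff_left diff_right scale_left scale_right) (simp add: algebra_simps)
qed

lemma cs_sq: "(cmod (f x y))^2 \<le> Re (f x x) * Re (f y y)"
proof -
  define a where "a = f x y"
  define b where "b = Re (f y y)"
  define c where "c = Re (f x x)"
  have b0: "b \<ge> 0" "c \<ge> 0" using psd unfolding b_def c_def by auto
  have fyx: "f y x = cnj a" unfolding a_def using herm by metis
  have fyy: "f y y = complex_of_real b" unfolding b_def using self_real by metis
  have fxx: "f x x = complex_of_real c" unfolding c_def using self_real by metis
  have aa: "a * cnj a = complex_of_real ((cmod a)^2)"
    using complex_norm_square[of a] by simp
  show ?thesis
  proof (cases "b = 0")
    case True
    show ?thesis
    proof (rule ccontr)
      assume "\<not> ?thesis"
      then have an: "(cmod a)^2 > 0" using True a_def by (simp add: b_def)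
      define t where "t = (c + 1) / (2 * (cmod a)^2)"
      define s where "s = complex_of_real t * a"
      have "f (x - s *\<^sub>C y) (x - s *\<^sub>C y) = complex_of_real c - complex_of_real t * (cnj a * a)
          - complex_of_real t * (a * cnj a)"
        unfolding expand using True fxx fyy fyx a_def s_def by (simp add: mult.assoc)
      also have "\<dots> = complex_of_real (c - 2 * t * (cmod a)^2)"
        using aa by (simp add: mult.commute)
      finally have "Re (f (x - s *\<^sub>C y) (x - s *\<^sub>C y)) = c - 2 * t * (cmod a)^2" by simp
      also have "\<dots> = -1" unfolding t_def using an by (simp add: field_simps)
      finally show False using psd[of "x - s *\<^sub>C y"] by simp
    qed
  next
    case False
    then have bp: "b > 0" using b0 by simp
    define s where "s = a / complex_of_real b"
    have fxy: "f x y = a" using a_def by simp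
    have bn: "complex_of_real b \<noteq> 0" using bp by simp
    have cs: "cnj s = cnj a / complex_of_real b" unfolding s_def by simp
    have e1: "cnj s * a = a * cnj a / complex_of_real b" using cs by simp
    have e2: "s * cnj a = a * cnj a / complex_of_real b" unfolding s_def by simp
    have e3: "s * cnj s * complex_of_real b = a * cnj a / complex_of_real b" unfolding cs s_def using bn
      by (simp add: field_simps)
    have "f (x - s *\<^sub>C y) (x - s *\<^sub>C y) = complex_of_real c - cnj s * a - s * cnj a + s * cnj s * complex_of_real b"
      by (simp only: expand fxx fyy fyx fxy)
    also have "\<dots> = complex_of_real c - a * cnj a / complex_of_real b"
      unfolding e1 e2 e3 by simp
    also have "\<dots> = complex_of_real (c - (cmod a)^2 / b)"
      unfolding aa by simp
    finally have "Re (f (x - s *\<^sub>C y) (x - s *\<^sub>C y)) = c - (cmod a)^2 / b" by simp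
    then have "c - (cmod a)^2 / b \<ge> 0" using psd[of "x - s *\<^sub>C y"] by simp
    then have "(cmod a)^2 \<le> c * b" using bp by (simp add: field_simps)
    then show ?thesis unfolding a_def b_def c_def by simp
  qed
qed

end

lemma herm_cinner: "herm_form (cinner :: 'a::complex_inner \<Rightarrow> 'a \<Rightarrow> complex)"
  by (unfold_locales) (auto simp: cinner_add_left cinner_scaleC_left cinner_self_nonneg intro: cinner_commute)

lemmas cinner_zero_left[simp] = herm_form.zero_left[OF herm_cinner]
lemmas cinner_zero_right[simp] = herm_form.zero_right[OF herm_cinner]
lemmas cinner_add_right = herm_form.add_right[OF herm_cinner]
lemmas cinner_scaleC_right = herm_form.scale_right[OF herm_cinner]
lemmas cinner_minus_left = herm_form.minus_left[OF herm_cinner]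
lemmas cinner_minus_right = herm_form.minus_right[OF herm_cinner]
lemmas cinner_diff_left = herm_form.diff_left[OF herm_cinner]
lemmas cinner_diff_right = herm_form.diff_right[OF herm_cinner]

lemma cinner_self_norm: "cinner x x = complex_of_real ((norm x)^2)"
proof -
  have "(norm x)^2 = Re (cinner x x)" using norm_eq_sqrt_cinner[of x] cinner_self_nonneg[of x] by simp
  then show ?thesis using cinner_self_nonneg[of x] by (simp add: complex_eq_iff)
qed

lemma Re_cinner_self: "Re (cinner x x) = (norm x)^2"
  by (simp add: cinner_self_norm)

lemma cinner_cs: "cmod (cinner x y) \<le> norm x * norm y"
proof -
  have "(cmod (cinner x y))^2 \<le> (norm x)^2 * (norm y)^2"
    using herm_form.cs_sq[OF herm_cinner, of x y] by (simp add: Re_cinner_self)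
  then have "(cmod (cinner x y))^2 \<le> (norm x * norm y)^2" by (simp add: power_mult_distrib)
  then show ?thesis by (rule power2_le_imp_le) simp
qed

lemma scaleC_zero_right[simp]: "c *\<^sub>C (0::'a::complex_vector) = 0"
  using scaleC_add_right[of c "0::'a" 0] by simp

lemma scaleC_zero_left[simp]: "0 *\<^sub>C (x::'a::complex_vector) = 0"
  using scaleR_scaleC[of 0 x] by simp

lemma scaleC_minus_right: "c *\<^sub>C (- x::'a::complex_vector) = - (c *\<^sub>C x)"
proof -
  have "c *\<^sub>C (- x) + c *\<^sub>C x = 0" using scaleC_add_right[of c "-x" x, symmetric] by simp
  then show ?thesis by (simp add: eq_neg_iff_add_eq_0)
qed

lemma scaleC_diff_right: "c *\<^sub>C (x - y::'a::complex_vector) = c *\<^sub>C x - c *\<^sub>C y"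
  by (simp only: diff_conv_add_uminus scaleC_add_right scaleC_minus_right)

lemma scaleC_minus_left: "(- c) *\<^sub>C (x::'a::complex_vector) = - (c *\<^sub>C x)"
proof -
  have "(- c) *\<^sub>C x + c *\<^sub>C x = 0" using scaleC_add_left[of "-c" c x, symmetric] by simp
  then show ?thesis by (simp add: eq_neg_iff_add_eq_0)
qed

lemma scaleC_diff_left: "(a - b) *\<^sub>C (x::'a::complex_vector) = a *\<^sub>C x - b *\<^sub>C x"
  by (simp only: diff_conv_add_uminus scaleC_add_left scaleC_minus_left)

lemma scaleC_of_real: "complex_of_real r *\<^sub>C (x::'a::complex_vector) = r *\<^sub>R x"
  by (simp add: scaleR_scaleC)

lemma scaleC_scaleR_comm: "c *\<^sub>C (r *\<^sub>R (x::'a::complex_vector)) = r *\<^sub>R (c *\<^sub>C x)"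
  by (simp add: scaleR_scaleC scaleC_scaleC mult.commute)

lemma cinner_scaleR_left: "cinner (r *\<^sub>R x) y = complex_of_real r * cinner x y"
  by (simp add: scaleR_scaleC cinner_scaleC_left)

lemma cinner_scaleR_right: "cinner x (r *\<^sub>R y) = complex_of_real r * cinner x y"
  by (simp add: scaleR_scaleC cinner_scaleC_right)

lemma norm_scaleC: "norm (c *\<^sub>C (x::'a::complex_inner)) = cmod c * norm x"
proof -
  have "(norm (c *\<^sub>C x))^2 = Re (cinner (c *\<^sub>C x) (c *\<^sub>C x))" by (simp add: Re_cinner_self)
  also have "\<dots> = Re ((c * cnj c) * cinner x x)" by (simp add: cinner_scaleC_left cinner_scaleC_right mult.assoc mult.left_commute)
  also have "\<dots> = (cmod c)^2 * (norm x)^2" by (simp add: cinner_self_norm complex_norm_square[symmetric])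
  finally have "(norm (c *\<^sub>C x))^2 = (cmod c * norm x)^2" by (simp add: power_mult_distrib)
  then show ?thesis by (simp add: power2_eq_iff_nonneg)
qed

lemma bounded_bilinear_cinner: "bounded_bilinear (cinner :: 'a::complex_inner \<Rightarrow> 'a \<Rightarrow> complex)"
proof
  fix a a' b b' :: 'a and r :: real
  show "cinner (a + a') b = cinner a b + cinner a' b" by (rule cinner_add_left)
  show "cinner a (b + b') = cinner a b + cinner a b'" by (rule cinner_add_right)
  show "cinner (r *\<^sub>R a) b = r *\<^sub>R cinner a b" by (simp add: cinner_scaleR_left scaleR_conv_of_real)
  show "cinner a (r *\<^sub>R b) = r *\<^sub>R cinner a b" by (simp add: cinner_scaleR_right scaleR_conv_of_real)
  show "\<exists>K. \<forall>a b. norm (cinner a b) \<le> norm a * norm b * K"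
    by (rule exI[of _ 1]) (simp add: cinner_cs)
qed

lemmas tendsto_cinner = bounded_bilinear.tendsto[OF bounded_bilinear_cinner]

lemma bounded_linear_scaleC: "bounded_linear (\<lambda>x::'a::complex_inner. c *\<^sub>C x)"
proof
  fix x y :: 'a and r :: real
  show "c *\<^sub>C (x + y) = c *\<^sub>C x + c *\<^sub>C y" by (rule scaleC_add_right)
  show "c *\<^sub>C (r *\<^sub>R x) = r *\<^sub>R (c *\<^sub>C x)" by (rule scaleC_scaleR_comm)
  show "\<exists>K. \<forall>x::'a. norm (c *\<^sub>C x) \<le> norm x * K"
    by (rule exI[of _ "cmod c"]) (simp add: norm_scaleC mult.commute)
qed

lemmas tendsto_scaleC = bounded_linear.tendsto[OF bounded_linear_scaleC]

lemma cinner_sum_left: "cinner (sum f A) y = (\<Sum>a\<in>A. cinner (f a) y)"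
  by (induction A rule: infinite_finite_induct) (auto simp: cinner_add_left)

lemma cinner_sum_right: "cinner y (sum f A) = (\<Sum>a\<in>A. cinner y (f a))"
  by (induction A rule: infinite_finite_induct) (auto simp: cinner_add_right)

lemma cinner_eq_zero_all: "(\<And>z. cinner z w = 0) \<Longrightarrow> w = 0"
  using cinner_eq_zero_iff by blast

definition lino :: "('a::complex_vector \<Rightarrow> 'a) \<Rightarrow> bool" where
  "lino f \<longleftrightarrow> (\<forall>x y. f (x + y) = f x + f y) \<and> (\<forall>c x. f (c *\<^sub>C x) = c *\<^sub>C f x)"

definition symm :: "('a::complex_inner \<Rightarrow> 'a) \<Rightarrow> bool" where
  "symm f \<longleftrightarrow> (\<forall>x y. cinner (f x) y = cinner x (f y))"

definition posop :: "('a::complex_inner \<Rightarrow> 'a) \<Rightarrow> bool" where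
  "posop f \<longleftrightarrow> (\<forall>x. Im (cinner (f x) x) = 0 \<and> 0 \<le> Re (cinner (f x) x))"

definition contr :: "('a::complex_inner \<Rightarrow> 'a) \<Rightarrow> bool" where
  "contr f \<longleftrightarrow> (\<forall>x. norm (f x) \<le> norm x)"

lemma lino_add: "lino f \<Longrightarrow> f (x + y) = f x + f y" unfolding lino_def by blast
lemma lino_scaleC: "lino f \<Longrightarrow> f (c *\<^sub>C x) = c *\<^sub>C f x" unfolding lino_def by blast
lemma lino_scaleR: "lino f \<Longrightarrow> f (r *\<^sub>R x) = r *\<^sub>R f x"
  by (simp add: scaleR_scaleC lino_scaleC)
lemma lino_zero: "lino f \<Longrightarrow> f 0 = 0"
  using lino_scaleR[of f 0 0] by simp
lemma lino_minus: "lino f \<Longrightarrow> f (- x) = - f x"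
  using lino_scaleR[of f "-1" x] by simp
lemma lino_diff: "lino f \<Longrightarrow> f (x - y) = f x - f y"
  by (simp only: diff_conv_add_uminus lino_add lino_minus)
lemma lino_sum: "lino f \<Longrightarrow> f (sum g A) = (\<Sum>a\<in>A. f (g a))"
  by (induction A rule: infinite_finite_induct) (auto simp: lino_zero lino_add)

lemma lino_funpow: "lino f \<Longrightarrow> lino (f ^^ k)"
  by (induction k) (auto simp: lino_def)

lemma symm_funpow: "symm f \<Longrightarrow> symm (f ^^ k)"
  by (induction k) (auto simp: symm_def funpow_swap1)

lemma contr_funpow: "contr f \<Longrightarrow> contr (f ^^ k)"
  unfolding contr_def
proof (induction k)
  case (Suc k)
  show ?case
  proof
    fix x
    have "norm (f ((f ^^ k) x)) \<le> norm ((f ^^ k) x)" using Suc.prems by blast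
    also have "\<dots> \<le> norm x" using Suc.IH Suc.prems by blast
    finally show "norm ((f ^^ Suc k) x) \<le> norm x" by simp
  qed
qed simp

definition peval :: "('a::complex_vector \<Rightarrow> 'a) \<Rightarrow> real poly \<Rightarrow> 'a \<Rightarrow> 'a" where
  "peval B p x = (\<Sum>k\<le>degree p. coeff p k *\<^sub>R (B ^^ k) x)"

lemma peval_bound: "degree p < N \<Longrightarrow> peval B p x = (\<Sum>k<N. coeff p k *\<^sub>R (B ^^ k) x)"
  unfolding peval_def
  by (rule sum.mono_neutral_right[symmetric]) (auto simp: coeff_eq_0)

lemma peval_add: "peval B (p + q) x = peval B p x + peval B q x"
proof -
  define N where "N = Suc (degree p + degree q)"
  have "degree (p + q) < N" using degree_add_le_max[of p q] unfolding N_def by simp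
  moreover have "degree p < N" "degree q < N" unfolding N_def by auto
  ultimately show ?thesis by (simp add: peval_bound[of _ N] scaleR_add_left sum.distrib)
qed

lemma peval_smult: "peval B (smult a p) x = a *\<^sub>R peval B p x"
proof -
  define N where "N = Suc (degree p)"
  have "degree (smult a p) < N" "degree p < N" using degree_smult_le[of a p] unfolding N_def by auto
  then show ?thesis by (simp add: peval_bound[of _ N] scaleR_sum_right)
qed

lemma peval_diff: "peval B (p - q) x = peval B p x - peval B q x"
proof -
  define N where "N = Suc (degree p + degree q)"
  have "degree (p - q) \<le> max (degree p) (degree q)" by (rule degree_diff_le_max)
  then have "degree (p - q) < N" unfolding N_def by simp
  moreover have "degree p < N" "degree q < N" unfolding N_def by auto
  ultimately show ?thesis by (simp add: peval_bound[of _ N] scaleR_diff_left sum_subtractf)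
qed

lemma peval_0[simp]: "peval B 0 x = 0"
  by (simp add: peval_def)

lemma peval_pCons:
  assumes "lino B"
  shows "peval B (pCons a p) x = a *\<^sub>R x + B (peval B p x)"
proof -
  define N where "N = Suc (degree p)"
  have d1: "degree (pCons a p) < Suc N" unfolding N_def by (simp add: degree_pCons_le le_imp_less_Suc)
  have d2: "degree p < N" unfolding N_def by simp
  have "peval B (pCons a p) x = (\<Sum>k<Suc N. coeff (pCons a p) k *\<^sub>R (B ^^ k) x)"
    by (rule peval_bound[OF d1])
  also have "\<dots> = a *\<^sub>R x + (\<Sum>k<N. coeff p k *\<^sub>R B ((B ^^ k) x))"
    unfolding sum.lessThan_Suc_shift by simp
  also have "(\<Sum>k<N. coeff p k *\<^sub>R B ((B ^^ k) x)) = B (peval B p x)"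
    by (simp add: peval_bound[OF d2] lino_sum[OF assms] lino_scaleR[OF assms])
  finally show ?thesis .
qed

lemma peval_X: "lino B \<Longrightarrow> peval B [:0, 1:] x = B x"
  by (simp add: peval_pCons lino_zero)

lemma peval_mult:
  assumes "lino B"
  shows "peval B (p * q) x = peval B p (peval B q x)"
proof (induction p rule: pCons_induct)
  case 0
  then show ?case by simp
next
  case (pCons a p)
  have "peval B (pCons a p * q) x = peval B (smult a q + pCons 0 (p * q)) x"
    by (simp add: mult_pCons_left)
  also have "\<dots> = a *\<^sub>R peval B q x + B (peval B p (peval B q x))"
    by (simp add: peval_add peval_smult peval_pCons[OF assms] pCons.IH)
  also have "\<dots> = peval B (pCons a p) (peval B q x)"
    by (simp add: peval_pCons[OF assms])
  finally show ?case .
qed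

lemma lino_peval:
  assumes "lino B"
  shows "lino (peval B p)"
proof (induction p rule: pCons_induct)
  case 0
  then show ?case by (simp add: lino_def)
next
  case (pCons a p)
  show ?case unfolding lino_def
    by (simp add: peval_pCons[OF assms] lino_add[OF assms] lino_add[OF pCons.IH]
        lino_scaleC[OF assms] lino_scaleC[OF pCons.IH] scaleR_add_right scaleC_add_right
        scaleC_scaleR_comm)
qed

lemma peval_commute:
  assumes "lino B" "lino T" "\<And>x. T (B x) = B (T x)"
  shows "T (peval B p x) = peval B p (T x)"
proof (induction p arbitrary: x rule: pCons_induct)
  case 0
  then show ?case by (simp add: lino_zero[OF assms(2)])
next
  case (pCons a p)
  show ?case
    by (simp add: peval_pCons[OF assms(1)] lino_add[OF assms(2)] lino_scaleR[OF assms(2)] assms(3) pCons.IH)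
qed

lemma symm_peval:
  assumes "lino B" "symm B"
  shows "symm (peval B p)"
proof (induction p rule: pCons_induct)
  case 0
  then show ?case by (simp add: symm_def)
next
  case (pCons a p)
  have c: "B (peval B p x) = peval B p (B x)" for x
    by (rule peval_commute[OF assms(1) assms(1)]) simp
  show ?case unfolding symm_def
  proof (intro allI)
    fix x y
    have "cinner (peval B (pCons a p) x) y = complex_of_real a * cinner x y + cinner (peval B p x) (B y)"
      using assms(2) by (simp add: peval_pCons[OF assms(1)] cinner_add_left cinner_scaleR_left symm_def)
    also have "\<dots> = complex_of_real a * cinner x y + cinner x (peval B p (B y))"
      using pCons.IH by (simp add: symm_def)
    also have "\<dots> = cinner x (peval B (pCons a p) y)"
      by (simp add: peval_pCons[OF assms(1)] cinner_add_right cinner_scaleR_right c)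
    finally show "cinner (peval B (pCons a p) x) y = cinner x (peval B (pCons a p) y)" .
  qed
qed

definition nn :: "real poly \<Rightarrow> bool" where
  "nn p \<longleftrightarrow> (\<forall>k. 0 \<le> coeff p k)"

lemma nn_add: "nn p \<Longrightarrow> nn q \<Longrightarrow> nn (p + q)"
  by (simp add: nn_def)
lemma nn_mult: "nn p \<Longrightarrow> nn q \<Longrightarrow> nn (p * q)"
  unfolding nn_def coeff_mult by (auto intro!: sum_nonneg)
lemma nn_smult: "0 \<le> a \<Longrightarrow> nn p \<Longrightarrow> nn (smult a p)"
  by (simp add: nn_def)
lemma nn_0: "nn 0" by (simp add: nn_def)
lemma nn_X: "nn [:0, 1:]" by (simp add: nn_def coeff_pCons split: nat.split)

lemma pos_funpow:
  assumes "lino B" "symm B" "posop B"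
  shows "Im (cinner ((B ^^ k) x) x) = 0 \<and> 0 \<le> Re (cinner ((B ^^ k) x) x)"
proof -
  have "\<exists>j. k = 2 * j \<or> k = Suc (2 * j)" by presburger
  then obtain j where "k = 2 * j \<or> k = Suc (2 * j)" by blast
  then show ?thesis
  proof
    assume k: "k = 2 * j"
    have "cinner ((B ^^ k) x) x = cinner ((B ^^ j) ((B ^^ j) x)) x"
      by (simp add: k mult_2 funpow_add)
    also have "\<dots> = cinner ((B ^^ j) x) ((B ^^ j) x)"
      using symm_funpow[OF assms(2), of j] by (simp add: symm_def)
    finally show ?thesis by (simp add: cinner_self_norm)
  next
    assume k: "k = Suc (2 * j)"
    have kk: "k = j + Suc j" using k by simp
    have "(B ^^ k) x = (B ^^ j) ((B ^^ Suc j) x)" by (simp only: kk funpow_add comp_apply)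
    then have "cinner ((B ^^ k) x) x = cinner ((B ^^ j) (B ((B ^^ j) x))) x"
      by simp
    also have "\<dots> = cinner (B ((B ^^ j) x)) ((B ^^ j) x)"
      using symm_funpow[OF assms(2), of j] by (simp add: symm_def)
    finally show ?thesis using assms(3) by (simp add: posop_def)
  qed
qed

lemma posop_peval:
  assumes "lino B" "symm B" "posop B" "nn p"
  shows "posop (peval B p)"
  unfolding posop_def
proof
  fix x
  have e: "cinner (peval B p x) x = (\<Sum>k\<le>degree p. complex_of_real (coeff p k) * cinner ((B ^^ k) x) x)"
    by (simp add: peval_def cinner_sum_left cinner_scaleR_left)
  show "Im (cinner (peval B p x) x) = 0 \<and> 0 \<le> Re (cinner (peval B p x) x)"
    unfolding e using pos_funpow[OF assms(1-3)] assms(4)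
    by (auto simp: Im_sum Re_sum nn_def intro!: sum_nonneg sum.neutral)
qed

lemma norm_peval:
  assumes "contr B" "nn p"
  shows "norm (peval B p x) \<le> poly p 1 * norm x"
proof -
  have "norm (peval B p x) \<le> (\<Sum>k\<le>degree p. norm (coeff p k *\<^sub>R (B ^^ k) x))"
    unfolding peval_def by (rule norm_sum)
  also have "\<dots> \<le> (\<Sum>k\<le>degree p. coeff p k * norm x)"
    using assms contr_funpow[OF assms(1)] by (auto simp: nn_def contr_def intro!: sum_mono mult_left_mono)
  also have "\<dots> = poly p 1 * norm x"
    by (simp add: poly_altdef sum_distrib_right)
  finally show ?thesis .
qed

fun pp :: "nat \<Rightarrow> real poly" where
  "pp 0 = 0"
| "pp (Suc n) = smult (1/2) ([:0, 1:] + pp n * pp n)"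

lemma nn_pp: "nn (pp n)"
  by (induction n) (auto intro!: nn_smult nn_add nn_mult nn_X simp: nn_0)

lemma pp_step: "pp (Suc (Suc n)) - pp (Suc n) = smult (1/2) ((pp (Suc n) + pp n) * (pp (Suc n) - pp n))"
proof -
  have "pp (Suc (Suc n)) - pp (Suc n) = smult (1/2) (([:0, 1:] + pp (Suc n) * pp (Suc n)) - ([:0, 1:] + pp n * pp n))"
    by (simp only: pp.simps smult_diff_right)
  also have "([:0, 1:] + pp (Suc n) * pp (Suc n)) - ([:0, 1:] + pp n * pp n) = (pp (Suc n) + pp n) * (pp (Suc n) - pp n)"
    by (simp add: algebra_simps)
  finally show ?thesis .
qed

lemma nn_pp_inc: "nn (pp (Suc n) - pp n)"
proof (induction n)
  case 0
  then show ?case by (simp add: nn_def coeff_pCons split: nat.split)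
next
  case (Suc n)
  show ?case unfolding pp_step
    by (rule nn_smult) (simp, rule nn_mult[OF nn_add[OF nn_pp nn_pp] Suc.IH])
qed

lemma nn_pp_mono: "m \<le> n \<Longrightarrow> nn (pp n - pp m)"
proof (induction n rule: dec_induct)
  case base
  then show ?case by (simp add: nn_0)
next
  case (step n)
  have e: "pp (Suc n) - pp m = (pp (Suc n) - pp n) + (pp n - pp m)" by (simp only: diff_add_cancel)
  show ?case unfolding e by (rule nn_add[OF nn_pp_inc step.IH])
qed

lemma poly_pp_bounds: "0 \<le> poly (pp n) 1 \<and> poly (pp n) 1 \<le> 1"
proof (induction n)
  case 0
  then show ?case by simp
next
  case (Suc n)
  then have "(poly (pp n) 1)^2 \<le> 1" by (simp add: power_le_one)
  moreover have "0 \<le> (poly (pp n) 1)^2" by simp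
  ultimately show ?case by (simp add: power2_eq_square)
qed

lemma herm_op: "lino P \<Longrightarrow> symm P \<Longrightarrow> posop P \<Longrightarrow> herm_form (\<lambda>u v. cinner (P u) v)"
proof -
  assume l: "lino P" and s: "symm P" and p: "posop P"
  show ?thesis
  proof
    fix x y z :: 'a and c
    show "cinner (P (x + y)) z = cinner (P x) z + cinner (P y) z" by (simp add: lino_add[OF l] cinner_add_left)
    show "cinner (P (c *\<^sub>C x)) z = c * cinner (P x) z" by (simp add: lino_scaleC[OF l] cinner_scaleC_left)
    have "cinner (P x) y = cinner x (P y)" using s by (simp add: symm_def)
    then show "cinner (P x) y = cnj (cinner (P y) x)" using cinner_commute[of x "P y"] by simp
    show "Im (cinner (P x) x) = 0 \<and> 0 \<le> Re (cinner (P x) x)" using p by (simp add: posop_def)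
  qed
qed

lemma bounded_linear_lino:
  assumes "lino T" "\<And>x. norm (T x) \<le> norm x * K"
  shows "bounded_linear T"
proof
  fix x y :: 'a and r :: real
  show "T (x + y) = T x + T y" by (rule lino_add[OF assms(1)])
  show "T (r *\<^sub>R x) = r *\<^sub>R T x" by (rule lino_scaleR[OF assms(1)])
  show "\<exists>K. \<forall>x. norm (T x) \<le> norm x * K" using assms(2) by blast
qed

locale sqrt_constr =
  fixes B :: "'a::chilbert_space \<Rightarrow> 'a"
  assumes linB: "lino B" and symB: "symm B" and posB: "posop B" and conB: "contr B"
begin

definition S :: "nat \<Rightarrow> 'a \<Rightarrow> 'a" where "S n = peval B (pp n)"

lemma linS: "lino (S n)" unfolding S_def by (rule lino_peval[OF linB])
lemma symS: "symm (S n)" unfolding S_def by (rule symm_peval[OF linB symB])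
lemma posS: "posop (S n)" unfolding S_def by (rule posop_peval[OF linB symB posB nn_pp])
lemma conS: "norm (S n x) \<le> norm x"
proof -
  have "norm (S n x) \<le> poly (pp n) 1 * norm x" unfolding S_def by (rule norm_peval[OF conB nn_pp])
  also have "\<dots> \<le> norm x" using poly_pp_bounds[of n] by (simp add: mult_left_le_one_le)
  finally show ?thesis .
qed

lemma S_Suc: "S (Suc n) x = (1/2) *\<^sub>R (B x + S n (S n x))"
  unfolding S_def by (simp add: peval_smult peval_add peval_X[OF linB] peval_mult[OF linB])

definition P :: "nat \<Rightarrow> nat \<Rightarrow> 'a \<Rightarrow> 'a" where "P n m = peval B (pp n - pp m)"

lemma P_eq: "P n m x = S n x - S m x"
  unfolding P_def S_def by (simp add: peval_diff)

lemma P_props: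
  assumes "m \<le> n"
  shows "lino (P n m)" "symm (P n m)" "posop (P n m)" "norm (P n m x) \<le> norm x"
proof -
  show "lino (P n m)" unfolding P_def by (rule lino_peval[OF linB])
  show "symm (P n m)" unfolding P_def by (rule symm_peval[OF linB symB])
  show "posop (P n m)" unfolding P_def by (rule posop_peval[OF linB symB posB nn_pp_mono[OF assms]])
  have "norm (P n m x) \<le> poly (pp n - pp m) 1 * norm x"
    unfolding P_def by (rule norm_peval[OF conB nn_pp_mono[OF assms]])
  also have "\<dots> \<le> norm x"
  proof -
    have h: "poly (pp n - pp m) 1 \<le> 1" using poly_pp_bounds[of n] poly_pp_bounds[of m] by simp
    show ?thesis using mult_right_mono[OF h norm_ge_zero[of x]] by simp
  qed
  finally show "norm (P n m x) \<le> norm x" .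
qed

definition a :: "'a \<Rightarrow> nat \<Rightarrow> real" where "a x n = Re (cinner (S n x) x)"

lemma a_inc: "incseq (a x)"
proof (rule incseq_SucI)
  fix n
  have "0 \<le> Re (cinner (P (Suc n) n x) x)" using P_props(3)[of n "Suc n"] by (simp add: posop_def)
  then show "a x n \<le> a x (Suc n)" unfolding a_def P_eq by (simp add: cinner_diff_left)
qed

lemma a_bound: "a x n \<le> (norm x)^2"
proof -
  have "a x n \<le> cmod (cinner (S n x) x)" unfolding a_def by (rule complex_Re_le_cmod)
  also have "\<dots> \<le> norm (S n x) * norm x" by (rule cinner_cs)
  also have "\<dots> \<le> norm x * norm x" using conS by (simp add: mult_right_mono)
  finally show ?thesis by (simp add: power2_eq_square)
qed

lemma key_est:
  assumes "m \<le> n"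
  shows "(norm (S n x - S m x))^4 \<le> (a x n - a x m) * (norm x)^2"
proof -
  note pr = P_props[OF assms]
  interpret hf: herm_form "\<lambda>u v. cinner (P n m u) v" by (rule herm_op[OF pr(1-3)])
  define y where "y = P n m x"
  have "(cmod (cinner (P n m x) y))^2 \<le> Re (cinner (P n m x) x) * Re (cinner (P n m y) y)"
    by (rule hf.cs_sq)
  moreover have "cmod (cinner (P n m x) y) = (norm y)^2" unfolding y_def by (simp add: cinner_self_norm norm_power)
  moreover have "Re (cinner (P n m x) x) = a x n - a x m" unfolding a_def P_eq by (simp add: cinner_diff_left)
  moreover have "Re (cinner (P n m y) y) \<le> (norm x)^2"
  proof -
    have "Re (cinner (P n m y) y) \<le> cmod (cinner (P n m y) y)" by (rule complex_Re_le_cmod)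
    also have "\<dots> \<le> norm (P n m y) * norm y" by (rule cinner_cs)
    also have "\<dots> \<le> norm x * norm x"
      using pr(4)[of y] pr(4)[of x] unfolding y_def by (meson mult_mono' norm_ge_zero order_trans)
    finally show ?thesis by (simp add: power2_eq_square)
  qed
  moreover have "0 \<le> a x n - a x m" using a_inc assms by (simp add: incseq_def)
  ultimately have "((norm y)^2)^2 \<le> (a x n - a x m) * (norm x)^2"
    by (smt (verit) mult_left_mono)
  then show ?thesis unfolding y_def P_eq by (simp add: power_mult[symmetric])
qed

lemma S_Cauchy: "Cauchy (\<lambda>n. S n x)"
proof -
  have "\<forall>i. a x i \<le> (norm x)^2" using a_bound by blast
  then obtain L where L: "a x \<longlonglongrightarrow> L" using incseq_convergent[OF a_inc] by blast
  then have Ca: "Cauchy (a x)" by (rule LIMSEQ_imp_Cauchy)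
  show ?thesis unfolding Cauchy_def
  proof (intro allI impI)
    fix e :: real assume e: "0 < e"
    define d where "d = e^4 / ((norm x)^2 + 1)"
    have d: "0 < d" unfolding d_def using e by (intro divide_pos_pos) (auto intro: add_nonneg_pos)
    obtain M where M: "\<forall>m\<ge>M. \<forall>n\<ge>M. dist (a x m) (a x n) < d" using Ca d unfolding Cauchy_def by blast
    have "dist (S m x) (S n x) < e" if mn: "m \<ge> M" "n \<ge> M" for m n
    proof -
      have main: "norm (S q x - S p x) < e" if pq: "p \<le> q" "p \<ge> M" "q \<ge> M" for p q
      proof -
        have "(norm (S q x - S p x))^4 \<le> (a x q - a x p) * (norm x)^2" by (rule key_est[OF pq(1)])
        also have "\<dots> \<le> d * (norm x)^2"
        proof -
          have "dist (a x p) (a x q) < d" using M pq by blast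
          then have "a x q - a x p \<le> d" by (simp add: dist_real_def)
          then show ?thesis by (intro mult_right_mono) auto
        qed
        also have "\<dots> < e^4"
        proof -
          have "d * (norm x)^2 = e^4 * ((norm x)^2 / ((norm x)^2 + 1))" unfolding d_def by simp
          also have "\<dots> < e^4 * 1"
          proof (intro mult_strict_left_mono)
            have "0 < (norm x)^2 + 1" by (simp add: add_nonneg_pos)
            then show "(norm x)^2 / ((norm x)^2 + 1) < 1" by (simp add: divide_less_eq)
          qed (use e in simp)
          finally show ?thesis by simp
        qed
        finally have "(norm (S q x - S p x))^4 < e^4" .
        then show ?thesis using e by (meson norm_ge_zero power_less_imp_less_base less_imp_le)
      qed
      show ?thesis
      proof (cases "m \<le> n")
        case True
        then show ?thesis using main[of m n] mn by (simp add: dist_norm norm_minus_commute)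
      next
        case False
        then show ?thesis using main[of n m] mn by (simp add: dist_norm)
      qed
    qed
    then show "\<exists>M. \<forall>m\<ge>M. \<forall>n\<ge>M. dist (S m x) (S n x) < e" by blast
  qed
qed

definition R :: "'a \<Rightarrow> 'a" where "R x = lim (\<lambda>n. S n x)"

lemma S_lim: "(\<lambda>n. S n x) \<longlonglongrightarrow> R x"
  unfolding R_def using S_Cauchy Cauchy_convergent_iff convergent_LIMSEQ_iff by blast

end

context sqrt_constr
begin

lemma linR: "lino R"
  unfolding lino_def
proof (intro conjI allI)
  fix x y :: 'a and c :: complex
  have "(\<lambda>n. S n (x + y)) \<longlonglongrightarrow> R x + R y"
    using tendsto_add[OF S_lim[of x] S_lim[of y]] by (simp add: lino_add[OF linS])
  then show "R (x + y) = R x + R y" using S_lim[of "x + y"] LIMSEQ_unique by blast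
  have "(\<lambda>n. S n (c *\<^sub>C x)) \<longlonglongrightarrow> c *\<^sub>C R x"
    using tendsto_scaleC[OF S_lim[of x], of c] by (simp add: lino_scaleC[OF linS])
  then show "R (c *\<^sub>C x) = c *\<^sub>C R x" using S_lim[of "c *\<^sub>C x"] LIMSEQ_unique by blast
qed

lemma conR: "norm (R x) \<le> norm x"
  using tendsto_norm[OF S_lim[of x]] conS by (intro LIMSEQ_le_const2) auto

lemma symR: "symm R"
  unfolding symm_def
proof (intro allI)
  fix x y
  have l1: "(\<lambda>n. cinner (S n x) y) \<longlonglongrightarrow> cinner (R x) y"
    by (rule tendsto_cinner[OF S_lim tendsto_const])
  have l2: "(\<lambda>n. cinner x (S n y)) \<longlonglongrightarrow> cinner x (R y)"
    by (rule tendsto_cinner[OF tendsto_const S_lim])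
  have "(\<lambda>n. cinner (S n x) y) = (\<lambda>n. cinner x (S n y))" using symS by (simp add: symm_def)
  then show "cinner (R x) y = cinner x (R y)" using l1 l2 LIMSEQ_unique by metis
qed

lemma posR: "posop R"
  unfolding posop_def
proof
  fix x
  have l: "(\<lambda>n. cinner (S n x) x) \<longlonglongrightarrow> cinner (R x) x"
    by (rule tendsto_cinner[OF S_lim tendsto_const])
  have "(\<lambda>n. Im (cinner (S n x) x)) \<longlonglongrightarrow> Im (cinner (R x) x)" by (rule tendsto_Im[OF l])
  moreover have "(\<lambda>n. Im (cinner (S n x) x)) = (\<lambda>n. 0)" using posS by (simp add: posop_def)
  ultimately have i: "Im (cinner (R x) x) = 0" using LIMSEQ_unique tendsto_const by metis
  have "(\<lambda>n. Re (cinner (S n x) x)) \<longlonglongrightarrow> Re (cinner (R x) x)" by (rule tendsto_Re[OF l])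
  then have "0 \<le> Re (cinner (R x) x)" using posS by (intro LIMSEQ_le_const) (auto simp: posop_def)
  then show "Im (cinner (R x) x) = 0 \<and> 0 \<le> Re (cinner (R x) x)" using i by simp
qed

lemma R_fix: "R x = (1/2) *\<^sub>R (B x + R (R x))"
proof -
  have l1: "(\<lambda>n. S (Suc n) x) \<longlonglongrightarrow> R x" using LIMSEQ_Suc[OF S_lim] .
  have z: "(\<lambda>n. S n (S n x - R x)) \<longlonglongrightarrow> 0"
  proof (rule Lim_null_comparison)
    show "\<forall>\<^sub>F n in sequentially. norm (S n (S n x - R x)) \<le> norm (S n x - R x)"
      using conS by simp
    have "(\<lambda>n. S n x - R x) \<longlonglongrightarrow> 0" using S_lim[of x] by (simp add: LIM_zero)
    then show "(\<lambda>n. norm (S n x - R x)) \<longlonglongrightarrow> 0" using tendsto_norm_zero by blast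
  qed
  have "(\<lambda>n. S n (S n x - R x) + S n (R x)) \<longlonglongrightarrow> 0 + R (R x)"
    by (rule tendsto_add[OF z S_lim])
  then have l2: "(\<lambda>n. S n (S n x)) \<longlonglongrightarrow> R (R x)"
    by (simp add: lino_diff[OF linS])
  have "(\<lambda>n. (1/2) *\<^sub>R (B x + S n (S n x))) \<longlonglongrightarrow> (1/2) *\<^sub>R (B x + R (R x))"
    by (intro tendsto_scaleR tendsto_add tendsto_const l2)
  then have "(\<lambda>n. S (Suc n) x) \<longlonglongrightarrow> (1/2) *\<^sub>R (B x + R (R x))" by (simp add: S_Suc)
  then show ?thesis using l1 LIMSEQ_unique by blast
qed

lemma R_commute:
  assumes "lino T" "\<And>x. norm (T x) \<le> norm x * K" "\<And>x. T (B x) = B (T x)"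
  shows "T (R x) = R (T x)"
proof -
  have bl: "bounded_linear T" by (rule bounded_linear_lino[OF assms(1,2)])
  have "(\<lambda>n. T (S n x)) \<longlonglongrightarrow> T (R x)" by (rule bounded_linear.tendsto[OF bl S_lim])
  moreover have "(\<lambda>n. T (S n x)) = (\<lambda>n. S n (T x))"
    unfolding S_def using peval_commute[OF linB assms(1) assms(3)] by simp
  ultimately show ?thesis using S_lim[of "T x"] LIMSEQ_unique by metis
qed

definition Q :: "'a \<Rightarrow> 'a" where "Q x = x - R x"

lemma linQ: "lino Q"
  unfolding lino_def Q_def by (simp add: lino_add[OF linR] lino_scaleC[OF linR] scaleC_diff_right)

lemma symQ: "symm Q"
  using symR unfolding symm_def Q_def by (simp add: cinner_diff_left cinner_diff_right)

lemma posQ: "posop Q"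
  unfolding posop_def
proof
  fix x
  have e: "cinner (Q x) x = complex_of_real ((norm x)^2) - cinner (R x) x"
    unfolding Q_def by (simp add: cinner_diff_left cinner_self_norm)
  have "Re (cinner (R x) x) \<le> cmod (cinner (R x) x)" by (rule complex_Re_le_cmod)
  also have "\<dots> \<le> norm (R x) * norm x" by (rule cinner_cs)
  also have "\<dots> \<le> norm x * norm x" using conR by (simp add: mult_right_mono)
  finally have "Re (cinner (R x) x) \<le> (norm x)^2" by (simp add: power2_eq_square)
  then show "Im (cinner (Q x) x) = 0 \<and> 0 \<le> Re (cinner (Q x) x)"
    using posR unfolding e posop_def by simp
qed

lemma QQ: "Q (Q x) = x - B x"
proof -
  have h: "(2::real) *\<^sub>R ((1/2) *\<^sub>R v) = v" for v :: 'a by simp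
  have "2 *\<^sub>R R x = B x + R (R x)" using arg_cong[OF R_fix[of x], of "\<lambda>v. 2 *\<^sub>R v"] unfolding h .
  then have "R (R x) = 2 *\<^sub>R R x - B x" by (simp add: algebra_simps)
  then show ?thesis unfolding Q_def by (simp add: lino_diff[OF linR] algebra_simps scaleR_2)
qed

lemma conQ: "norm (Q x) \<le> norm x * 2"
proof -
  have "norm (Q x) \<le> norm x + norm (R x)" unfolding Q_def by (rule norm_triangle_ineq4)
  then show ?thesis using conR[of x] by simp
qed

lemma Q_commute:
  assumes "lino T" "\<And>x. norm (T x) \<le> norm x * K" "\<And>x. T (B x) = B (T x)"
  shows "T (Q x) = Q (T x)"
  unfolding Q_def using R_commute[OF assms] by (simp add: lino_diff[OF assms(1)])

end

lemma pos_zero: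
  assumes "lino P" "symm P" "posop P" "Re (cinner (P y) y) = 0"
  shows "P y = 0"
proof -
  interpret hf: herm_form "\<lambda>u v. cinner (P u) v" by (rule herm_op[OF assms(1-3)])
  have "(cmod (cinner (P y) (P y)))^2 \<le> Re (cinner (P y) y) * Re (cinner (P (P y)) (P y))"
    by (rule hf.cs_sq)
  then have "(cmod (cinner (P y) (P y)))^2 \<le> 0" using assms(4) by simp
  then have "cinner (P y) (P y) = 0" by simp
  then show ?thesis using cinner_eq_zero_iff by blast
qed

lemma G_sq_bound:
  assumes "lino G" "symm G" "posop G" "\<And>x. norm (G x) \<le> norm x * K"
  shows "(norm (G x))^2 \<le> \<bar>K\<bar> * Re (cinner (G x) x)"
proof -
  interpret hf: herm_form "\<lambda>u v. cinner (G u) v" by (rule herm_op[OF assms(1-3)])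
  have cs: "(cmod (cinner (G x) (G x)))^2 \<le> Re (cinner (G x) x) * Re (cinner (G (G x)) (G x))"
    by (rule hf.cs_sq)
  have r0: "0 \<le> Re (cinner (G x) x)" using assms(3) by (simp add: posop_def)
  have "Re (cinner (G (G x)) (G x)) \<le> cmod (cinner (G (G x)) (G x))" by (rule complex_Re_le_cmod)
  also have "\<dots> \<le> norm (G (G x)) * norm (G x)" by (rule cinner_cs)
  also have "\<dots> \<le> (norm (G x) * \<bar>K\<bar>) * norm (G x)"
  proof (rule mult_right_mono)
    show "norm (G (G x)) \<le> norm (G x) * \<bar>K\<bar>"
      using assms(4)[of "G x"] by (meson abs_ge_self mult_left_mono norm_ge_zero order_trans)
  qed simp
  finally have b: "Re (cinner (G (G x)) (G x)) \<le> \<bar>K\<bar> * (norm (G x))^2" by (simp add: power2_eq_square mult_ac)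
  have "((norm (G x))^2)^2 \<le> Re (cinner (G x) x) * (\<bar>K\<bar> * (norm (G x))^2)"
    using cs mult_left_mono[OF b r0] by (simp add: cinner_self_norm norm_power)
  then have "(norm (G x))^2 * (norm (G x))^2 \<le> (\<bar>K\<bar> * Re (cinner (G x) x)) * (norm (G x))^2"
    by (simp add: power2_eq_square mult_ac)
  then show ?thesis
  proof (cases "norm (G x) = 0")
    case True
    then show ?thesis using r0 by simp
  next
    case False
    then have "0 < (norm (G x))^2" by simp
    then show ?thesis using mult_right_le_imp_le[OF \<open>(norm (G x))^2 * (norm (G x))^2 \<le> (\<bar>K\<bar> * Re (cinner (G x) x)) * (norm (G x))^2\<close>] by blast
  qed
qed

lemma sqrt_exists_unique:
  fixes G :: "'a::chilbert_space \<Rightarrow> 'a"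
  assumes linG: "lino G" and symG: "symm G" and posG: "posop G" and bG: "\<And>x. norm (G x) \<le> norm x * K"
  shows "\<exists>!S. lino S \<and> (\<exists>K. \<forall>x. norm (S x) \<le> norm x * K) \<and> symm S \<and> posop S \<and> S \<circ> S = G"
proof -
  define c where "c = 1 / (\<bar>K\<bar> + 1)"
  have c0: "0 < c" unfolding c_def by (simp add: add_nonneg_pos)
  have cK: "c * \<bar>K\<bar> \<le> 1" unfolding c_def by (simp add: field_simps)
  define B where "B x = x - c *\<^sub>R G x" for x
  have ReG: "0 \<le> Re (cinner (G x) x)" for x using posG by (simp add: posop_def)
  have ImG: "Im (cinner (G x) x) = 0" for x using posG by (simp add: posop_def)
  have ReGle: "Re (cinner (G x) x) \<le> \<bar>K\<bar> * (norm x)^2" for x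
  proof -
    have "Re (cinner (G x) x) \<le> cmod (cinner (G x) x)" by (rule complex_Re_le_cmod)
    also have "\<dots> \<le> norm (G x) * norm x" by (rule cinner_cs)
    also have "\<dots> \<le> (norm x * \<bar>K\<bar>) * norm x"
      using bG[of x] by (intro mult_right_mono) (meson abs_ge_self mult_left_mono norm_ge_zero order_trans, simp)
    finally show ?thesis by (simp add: power2_eq_square mult_ac)
  qed
  have linB: "lino B"
    unfolding lino_def B_def by (simp add: lino_add[OF linG] lino_scaleC[OF linG] scaleC_diff_right
        scaleC_scaleR_comm scaleR_add_right algebra_simps)
  have symB: "symm B"
    using symG unfolding symm_def B_def by (simp add: cinner_diff_left cinner_diff_right cinner_scaleR_left cinner_scaleR_right)
  have posB: "posop B"
    unfolding posop_def
  proof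
    fix x
    have e: "cinner (B x) x = complex_of_real ((norm x)^2) - complex_of_real c * cinner (G x) x"
      unfolding B_def by (simp add: cinner_diff_left cinner_self_norm cinner_scaleR_left)
    have "c * Re (cinner (G x) x) \<le> c * (\<bar>K\<bar> * (norm x)^2)" using ReGle[of x] c0 by simp
    also have "\<dots> \<le> (norm x)^2" using cK mult_right_mono[OF cK, of "(norm x)^2"] by (simp add: mult.assoc[symmetric])
    finally show "Im (cinner (B x) x) = 0 \<and> 0 \<le> Re (cinner (B x) x)"
      unfolding e using ImG[of x] by simp
  qed
  have conB: "contr B"
    unfolding contr_def
  proof
    fix x
    have xG: "cinner x (G x) = cinner (G x) x" using symG by (simp add: symm_def)
    define r where "r = Re (cinner (G x) x)"
    have cg: "cinner (G x) x = complex_of_real r" unfolding r_def using ImG[of x] by (simp add: complex_eq_iff)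
    have bx: "B x = x - complex_of_real c *\<^sub>C G x" unfolding B_def by (simp add: scaleR_scaleC)
    have "cinner (B x) (B x) = cinner x x - cnj (complex_of_real c) * cinner x (G x)
          - complex_of_real c * cinner (G x) x + complex_of_real c * cnj (complex_of_real c) * cinner (G x) (G x)"
      unfolding bx by (rule herm_form.expand[OF herm_cinner])
    also have "\<dots> = complex_of_real ((norm x)^2 - 2 * c * Re (cinner (G x) x) + c * c * (norm (G x))^2)"
      unfolding xG cg cinner_self_norm r_def[symmetric] by simp
    finally have nb: "(norm (B x))^2 = (norm x)^2 - 2 * c * Re (cinner (G x) x) + c * c * (norm (G x))^2"
      using Re_cinner_self[of "B x"] by simp
    have "c * c * (norm (G x))^2 \<le> c * c * (\<bar>K\<bar> * Re (cinner (G x) x))"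
      using G_sq_bound[OF linG symG posG bG, of x] c0 by simp
    also have "\<dots> = c * ((c * \<bar>K\<bar>) * Re (cinner (G x) x))" by (simp add: mult_ac)
    also have "\<dots> \<le> c * Re (cinner (G x) x)"
      using cK c0 ReG[of x] by (intro mult_left_mono) (auto simp: mult_left_le_one_le)
    moreover have "0 \<le> c * Re (cinner (G x) x)" using c0 ReG[of x] by simp
    ultimately have "(norm (B x))^2 \<le> (norm x)^2" unfolding nb by linarith
    then show "norm (B x) \<le> norm x" by (simp add: power2_le_iff_abs_le)
  qed
  interpret sc: sqrt_constr B by unfold_locales (fact linB symB posB conB)+
  define Sq where "Sq x = (1 / sqrt c) *\<^sub>R sc.Q x" for x
  have linSq: "lino Sq" unfolding Sq_def lino_def
    by (simp add: lino_add[OF sc.linQ] lino_scaleC[OF sc.linQ] scaleR_add_right scaleC_scaleR_comm)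
  have symSq: "symm Sq" using sc.symQ unfolding Sq_def symm_def by (simp add: cinner_scaleR_left cinner_scaleR_right)
  have posSq: "posop Sq" using sc.posQ c0 unfolding Sq_def posop_def by (simp add: cinner_scaleR_left)
  have bSq: "norm (Sq x) \<le> norm x * (2 / sqrt c)" for x
  proof -
    have "norm (Sq x) = (1 / sqrt c) * norm (sc.Q x)" unfolding Sq_def using c0 by simp
    also have "\<dots> \<le> (1 / sqrt c) * (norm x * 2)" using sc.conQ[of x] c0 by (intro mult_left_mono) auto
    finally show ?thesis by simp
  qed
  have SqSq: "Sq (Sq x) = G x" for x
  proof -
    have "Sq (Sq x) = (1 / sqrt c) *\<^sub>R (1 / sqrt c) *\<^sub>R sc.Q (sc.Q x)"
      unfolding Sq_def by (simp add: lino_scaleR[OF sc.linQ])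
    also have "\<dots> = (1 / c) *\<^sub>R (c *\<^sub>R G x)" unfolding sc.QQ B_def using c0
      by (simp add: real_sqrt_mult[symmetric])
    also have "\<dots> = G x" using c0 by simp
    finally show ?thesis .
  qed
  have uniq: "T = Sq" if T: "lino T" "\<And>x. norm (T x) \<le> norm x * K'" "symm T" "posop T" "T \<circ> T = G" for T K'
  proof
    fix x
    have TG: "T (G x) = G (T x)" for x using T(5) by (metis comp_apply)
    have TB: "T (B x) = B (T x)" for x unfolding B_def by (simp add: lino_diff[OF T(1)] lino_scaleR[OF T(1)] TG)
    have TSq: "T (Sq x) = Sq (T x)" for x
      unfolding Sq_def using sc.Q_commute[OF T(1) T(2) TB] by (simp add: lino_scaleR[OF T(1)])
    define y where "y = Sq x - T x"
    have "Sq y + T y = 0"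
      unfolding y_def using TSq[of x] SqSq[of x] T(5)
      by (simp add: lino_diff[OF linSq] lino_diff[OF T(1)] fun_eq_iff)
    then have "Re (cinner (Sq y) y) + Re (cinner (T y) y) = 0"
      using cinner_add_left[of "Sq y" "T y" y] by (metis cinner_zero_left plus_complex.sel(1) zero_complex.sel(1))
    moreover have "0 \<le> Re (cinner (Sq y) y)" "0 \<le> Re (cinner (T y) y)"
      using posSq T(4) by (auto simp: posop_def)
    ultimately have "Re (cinner (Sq y) y) = 0" "Re (cinner (T y) y) = 0" by linarith+
    then have z: "Sq y = 0" "T y = 0" using pos_zero[OF linSq symSq posSq] pos_zero[OF T(1) T(3) T(4)] by auto
    have "cinner y y = cinner x (Sq y) - cinner x (T y)"
      using symSq T(3) unfolding y_def symm_def by (simp add: cinner_diff_left)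
    then have "cinner y y = 0" using z by simp
    then have "y = 0" using cinner_eq_zero_iff by blast
    then show "T x = Sq x" unfolding y_def by simp
  qed
  show ?thesis
  proof (rule ex1I[of _ Sq])
    show "lino Sq \<and> (\<exists>K. \<forall>x. norm (Sq x) \<le> norm x * K) \<and> symm Sq \<and> posop Sq \<and> Sq \<circ> Sq = G"
      using linSq bSq symSq posSq SqSq by (auto simp: fun_eq_iff simp del: times_divide_eq_right)
  next
    fix T assume "lino T \<and> (\<exists>K. \<forall>x. norm (T x) \<le> norm x * K) \<and> symm T \<and> posop T \<and> T \<circ> T = G"
    then show "T = Sq" using uniq by blast
  qed
qed

lemma cinner_step_down:
  fixes u m :: "'a::complex_inner"
  assumes "m \<noteq> 0"
  defines "s \<equiv> cinner u m / complex_of_real ((norm m)^2)"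
  shows "(norm (u - s *\<^sub>C m))^2 = (norm u)^2 - (cmod (cinner u m))^2 / (norm m)^2"
proof -
  define a where "a = cinner u m"
  define b where "b = (norm m)^2"
  have bp: "b > 0" unfolding b_def using assms(1) by simp
  have bn: "complex_of_real b \<noteq> 0" using bp by simp
  have fyx: "cinner m u = cnj a" unfolding a_def by (rule cinner_commute)
  have aa: "a * cnj a = complex_of_real ((cmod a)^2)"
    using complex_norm_square[of a] by simp
  have sd: "s = a / complex_of_real b" unfolding s_def a_def b_def by simp
  have cs: "cnj s = cnj a / complex_of_real b" unfolding sd by simp
  have e1: "cnj s * a = a * cnj a / complex_of_real b" using cs by simp
  have e2: "s * cnj a = a * cnj a / complex_of_real b" unfolding sd by simp
  have e3: "s * cnj s * complex_of_real b = a * cnj a / complex_of_real b" unfolding cs sd using bn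
    by (simp add: field_simps)
  have "cinner (u - s *\<^sub>C m) (u - s *\<^sub>C m) = cinner u u - cnj s * cinner u m - s * cinner m u + s * cnj s * cinner m m"
    by (rule herm_form.expand[OF herm_cinner])
  also have "\<dots> = cinner u u - cnj s * a - s * cnj a + s * cnj s * complex_of_real b"
    unfolding fyx a_def[symmetric] by (simp add: b_def cinner_self_norm[of m])
  also have "\<dots> = cinner u u - a * cnj a / complex_of_real b"
    unfolding e1 e2 e3 by simp
  also have "\<dots> = complex_of_real ((norm u)^2 - (cmod a)^2 / b)"
    unfolding aa cinner_self_norm by simp
  finally show ?thesis unfolding a_def b_def using Re_cinner_self[of "u - s *\<^sub>C m"] by simp
qed

definition csub :: "'a::complex_vector set \<Rightarrow> bool" where
  "csub M \<longleftrightarrow> 0 \<in> M \<and> (\<forall>x\<in>M. \<forall>y\<in>M. x + y \<in> M) \<and> (\<forall>c. \<forall>x\<in>M. c *\<^sub>C x \<in> M)"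

lemma csub_diff: "csub M \<Longrightarrow> x \<in> M \<Longrightarrow> y \<in> M \<Longrightarrow> x - y \<in> M"
  unfolding csub_def using scaleC_minus_left[of 1 y] scaleC_one[of y]
  by (metis diff_conv_add_uminus)

lemma projection:
  fixes M :: "'a::chilbert_space set"
  assumes sub: "csub M" and cl: "closed M"
  shows "\<exists>p\<in>M. \<forall>m\<in>M. cinner m (x - p) = 0"
proof -
  have M0: "0 \<in> M" using sub by (simp add: csub_def)
  have Madd: "\<And>a b. a \<in> M \<Longrightarrow> b \<in> M \<Longrightarrow> a + b \<in> M" using sub by (simp add: csub_def)
  have Msc: "\<And>c a. a \<in> M \<Longrightarrow> c *\<^sub>C a \<in> M" using sub by (simp add: csub_def)
  define N where "N = (\<lambda>m. norm (x - m)) ` M"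
  define d where "d = Inf N"
  have Nne: "N \<noteq> {}" unfolding N_def using M0 by auto
  have bdd: "bdd_below N" unfolding N_def by (rule bdd_belowI[of _ 0]) auto
  have dle: "d \<le> norm (x - m)" if "m \<in> M" for m
    unfolding d_def N_def using that bdd by (intro cInf_lower) (auto simp: N_def)
  have d0: "0 \<le> d" unfolding d_def by (rule cInf_greatest[OF Nne]) (auto simp: N_def)
  have "\<exists>m\<in>M. norm (x - m) < d + 1 / real (Suc n)" for n
  proof -
    have "Inf N < d + 1 / real (Suc n)" unfolding d_def by simp
    then obtain t where "t \<in> N" "t < d + 1 / real (Suc n)" using cInf_lessD[OF Nne] by blast
    then show ?thesis unfolding N_def by auto
  qed
  then obtain mm where mm: "\<And>n. mm n \<in> M" "\<And>n. norm (x - mm n) < d + 1 / real (Suc n)" by metis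
  define e where "e n = (2 * d + 1) / real (Suc n)" for n
  have sq: "(norm (x - mm n))^2 \<le> d^2 + e n" for n
  proof -
    have "norm (x - mm n) \<le> d + 1 / real (Suc n)" using mm(2)[of n] by simp
    then have "(norm (x - mm n))^2 \<le> (d + 1 / real (Suc n))^2"
      by (intro power_mono) auto
    also have "\<dots> = d^2 + (2 * d + 1 / real (Suc n)) / real (Suc n)"
    proof -
      have "\<And>q::real. q > 0 \<Longrightarrow> (d + 1 / q)^2 = d^2 + (2 * d + 1 / q) / q"
        by (simp add: power2_eq_square field_simps)
      then show ?thesis by simp
    qed
    also have "\<dots> \<le> d^2 + e n" unfolding e_def using d0
      by (intro add_left_mono divide_right_mono) auto
    finally show ?thesis .
  qed
  have para: "(norm (mm k - mm n))^2 \<le> 2 * e n + 2 * e k" for n k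
  proof -
    define u where "u = x - mm n"
    define v where "v = x - mm k"
    have pl: "(norm (u + v))^2 + (norm (u - v))^2 = 2 * (norm u)^2 + 2 * (norm v)^2"
    proof -
      have "cinner (u + v) (u + v) + cinner (u - v) (u - v) = 2 * cinner u u + 2 * cinner v v"
        by (simp add: cinner_add_left cinner_add_right cinner_diff_left cinner_diff_right algebra_simps)
      then show ?thesis unfolding cinner_self_norm
        by (metis (mono_tags, lifting) of_real_add of_real_eq_iff of_real_mult of_real_numeral)
    qed
    have mid: "(1/2::real) *\<^sub>R (mm n + mm k) \<in> M"
      unfolding scaleR_scaleC by (rule Msc[OF Madd[OF mm(1) mm(1)]])
    have "u + v = 2 *\<^sub>R (x - (1/2::real) *\<^sub>R (mm n + mm k))" unfolding u_def v_def
      by (simp add: algebra_simps scaleR_2)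
    then have "(norm (u + v))^2 = 4 * (norm (x - (1/2::real) *\<^sub>R (mm n + mm k)))^2"
      by (simp add: power2_eq_square)
    moreover have "d^2 \<le> (norm (x - (1/2::real) *\<^sub>R (mm n + mm k)))^2"
      using dle[OF mid] d0 by (intro power_mono) auto
    moreover have "(norm (u - v))^2 = (norm (mm k - mm n))^2" unfolding u_def v_def by simp
    moreover have "(norm u)^2 \<le> d^2 + e n" unfolding u_def by (rule sq)
    moreover have "(norm v)^2 \<le> d^2 + e k" unfolding v_def by (rule sq)
    ultimately show ?thesis using pl by linarith
  qed
  have e0: "e \<longlonglongrightarrow> 0"
  proof -
    have "(\<lambda>n. 1 / real (Suc n)) \<longlonglongrightarrow> 0" by (rule LIMSEQ_Suc[OF lim_inverse_n'])
    then have "(\<lambda>n. (2 * d + 1) * (1 / real (Suc n))) \<longlonglongrightarrow> 0" by (rule tendsto_mult_right_zero)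
    then show ?thesis unfolding e_def by simp
  qed
  have Ca: "Cauchy mm"
    unfolding Cauchy_def
  proof (intro allI impI)
    fix r :: real assume r: "0 < r"
    have "0 < r^2 / 4" using r by simp
    from order_tendstoD(2)[OF e0 this] have "\<forall>\<^sub>F n in sequentially. e n < r^2 / 4" .
    then obtain N where N: "\<And>n. n \<ge> N \<Longrightarrow> e n < r^2 / 4" by (auto simp: eventually_sequentially)
    have "dist (mm m) (mm n) < r" if "m \<ge> N" "n \<ge> N" for m n
    proof -
      have "(norm (mm m - mm n))^2 < r^2"
        using para[of m n] N[OF that(1)] N[OF that(2)] by (simp add: norm_minus_commute)
      then have "norm (mm m - mm n) < r" using r by (meson norm_ge_zero power_less_imp_less_base less_imp_le)
      then show ?thesis by (simp add: dist_norm)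
    qed
    then show "\<exists>N. \<forall>m\<ge>N. \<forall>n\<ge>N. dist (mm m) (mm n) < r" by blast
  qed
  then obtain p where p: "mm \<longlonglongrightarrow> p" using Cauchy_convergent_iff convergent_def by blast
  have pM: "p \<in> M" using cl p mm(1) by (auto simp: closed_sequential_limits)
  have "(\<lambda>n. norm (x - mm n)) \<longlonglongrightarrow> norm (x - p)" by (intro tendsto_intros p)
  moreover have "(\<lambda>n. d + 1 / real (Suc n)) \<longlonglongrightarrow> d + 0"
    by (intro tendsto_add tendsto_const) (rule LIMSEQ_Suc[OF lim_inverse_n'])
  ultimately have "norm (x - p) \<le> d" using mm(2) by (intro LIMSEQ_le) (auto intro: less_imp_le)
  then have np: "norm (x - p) = d" using dle[OF pM] by simp
  show ?thesis
  proof (intro bexI[OF _ pM] ballI)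
    fix m assume mM: "m \<in> M"
    show "cinner m (x - p) = 0"
    proof (cases "m = 0")
      case True then show ?thesis by simp
    next
      case False
      define s where "s = cinner (x - p) m / complex_of_real ((norm m)^2)"
      have "p + s *\<^sub>C m \<in> M" using Madd[OF pM Msc[OF mM]] by simp
      then have "d \<le> norm (x - (p + s *\<^sub>C m))" by (rule dle)
      then have "d^2 \<le> (norm (x - p - s *\<^sub>C m))^2" using d0 by (simp add: diff_diff_eq power_mono)
      also have "\<dots> = d^2 - (cmod (cinner (x - p) m))^2 / (norm m)^2"
        using cinner_step_down[OF False, of "x - p"] unfolding s_def np by simp
      finally have "(cmod (cinner (x - p) m))^2 / (norm m)^2 \<le> 0" by simp
      then have "cmod (cinner (x - p) m) = 0" using False
        by (metis divide_le_0_iff norm_ge_zero power_eq_0_iff zero_less_power2 not_le norm_eq_zero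
            antisym zero_le_power2)
      then show ?thesis using cinner_commute[of m "x - p"] by simp
    qed
  qed
qed

lemma closed_sub_full:
  fixes M :: "'a::chilbert_space set"
  assumes "csub M" "closed M" "\<And>w. (\<And>m. m \<in> M \<Longrightarrow> cinner m w = 0) \<Longrightarrow> w = 0"
  shows "M = UNIV"
proof -
  have "x \<in> M" for x
  proof -
    obtain p where "p \<in> M" "\<And>m. m \<in> M \<Longrightarrow> cinner m (x - p) = 0" using projection[OF assms(1,2)] by blast
    then show ?thesis using assms(3)[of "x - p"] by simp
  qed
  then show ?thesis by blast
qed

lemma csub_closure:
  fixes M :: "'a::chilbert_space set"
  assumes "csub M"
  shows "csub (closure M)"
  unfolding csub_def
proof (intro conjI ballI allI)
  show "0 \<in> closure M" using assms closure_subset unfolding csub_def by blast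
  fix x y assume x: "x \<in> closure M" and y: "y \<in> closure M"
  obtain X where X: "\<And>n. X n \<in> M" "X \<longlonglongrightarrow> x" using x unfolding closure_sequential by blast
  obtain Y where Y: "\<And>n. Y n \<in> M" "Y \<longlonglongrightarrow> y" using y unfolding closure_sequential by blast
  have l: "(\<lambda>n. X n + Y n) \<longlonglongrightarrow> x + y" by (intro tendsto_add X Y)
  have m: "\<forall>n. X n + Y n \<in> M" using X Y assms by (simp add: csub_def)
  show "x + y \<in> closure M" unfolding closure_sequential
    by (intro exI[of _ "\<lambda>n. X n + Y n"]) (use l m in auto)
next
  fix c x assume x: "x \<in> closure M"
  obtain X where X: "\<And>n. X n \<in> M" "X \<longlonglongrightarrow> x" using x unfolding closure_sequential by blast
  have l: "(\<lambda>n. c *\<^sub>C X n) \<longlonglongrightarrow> c *\<^sub>C x" by (rule tendsto_scaleC[OF X(2)])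
  have m: "\<forall>n. c *\<^sub>C X n \<in> M" using X assms by (simp add: csub_def)
  show "c *\<^sub>C x \<in> closure M" unfolding closure_sequential
    by (intro exI[of _ "\<lambda>n. c *\<^sub>C X n"]) (use l m in auto)
qed

lemma orth_closure:
  fixes M :: "'a::chilbert_space set"
  assumes "\<And>m. m \<in> M \<Longrightarrow> cinner m w = 0" "m \<in> closure M"
  shows "cinner m w = 0"
proof -
  obtain X where X: "\<And>n. X n \<in> M" "X \<longlonglongrightarrow> m" using assms(2) unfolding closure_sequential by blast
  have l: "(\<lambda>n. cinner (X n) w) \<longlonglongrightarrow> cinner m w" by (rule tendsto_cinner[OF X(2) tendsto_const])
  have "(\<lambda>n. cinner (X n) w) = (\<lambda>n. 0)" using X(1) assms(1) by simp
  then have "(\<lambda>n. 0::complex) \<longlonglongrightarrow> cinner m w" using l by simp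
  then show ?thesis using LIMSEQ_unique[OF _ tendsto_const] by metis
qed

lemma dense_sub:
  fixes M :: "'a::chilbert_space set"
  assumes "csub M" "\<And>w. (\<And>m. m \<in> M \<Longrightarrow> cinner m w = 0) \<Longrightarrow> w = 0"
  shows "closure M = UNIV"
proof (rule closed_sub_full[OF csub_closure[OF assms(1)] closed_closure])
  fix w assume h: "\<And>m. m \<in> closure M \<Longrightarrow> cinner m w = 0"
  show "w = 0"
  proof (rule assms(2))
    fix m assume "m \<in> M"
    then show "cinner m w = 0" using h closure_subset by blast
  qed
qed

lemma lin_op_add: "lin_op D A \<Longrightarrow> x \<in> D \<Longrightarrow> y \<in> D \<Longrightarrow> x + y \<in> D \<and> A (x + y) = A x + A y"
  unfolding lin_op_def by blast
lemma lin_op_scaleC: "lin_op D A \<Longrightarrow> x \<in> D \<Longrightarrow> c *\<^sub>C x \<in> D \<and> A (c *\<^sub>C x) = c *\<^sub>C A x"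
  unfolding lin_op_def by blast
lemma lin_op_zero: "lin_op D A \<Longrightarrow> 0 \<in> D \<and> A 0 = 0"
  using lin_op_scaleC[of D A 0 0] unfolding lin_op_def by simp
lemma lin_op_minus: "lin_op D A \<Longrightarrow> x \<in> D \<Longrightarrow> - x \<in> D \<and> A (- x) = - A x"
  using lin_op_scaleC[of D A x "-1"] by (simp add: scaleC_minus_left scaleC_one)
lemma lin_op_diff: "lin_op D A \<Longrightarrow> x \<in> D \<Longrightarrow> y \<in> D \<Longrightarrow> x - y \<in> D \<and> A (x - y) = A x - A y"
  using lin_op_add[of D A x "- y"] lin_op_minus[of D A y] by (simp add: diff_conv_add_uminus del: add_uminus_conv_diff)

lemma dense_orth:
  fixes D :: "'a::chilbert_space set"
  assumes "closure D = UNIV" "\<And>\<xi>. \<xi> \<in> D \<Longrightarrow> cinner \<xi> w = 0"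
  shows "w = 0"
proof -
  have "cinner w w = 0" using orth_closure[of D w w] assms by blast
  then show ?thesis using cinner_eq_zero_iff by blast
qed

lemma adj_prop:
  assumes "\<eta> \<in> adj_dom D A" "\<xi> \<in> D"
  shows "cinner (A \<xi>) \<eta> = cinner \<xi> (adj D A \<eta>)"
proof -
  have "\<exists>\<zeta>. \<forall>\<xi>\<in>D. cinner (A \<xi>) \<eta> = cinner \<xi> \<zeta>" using assms(1) by (simp add: adj_dom_def)
  then have "\<forall>\<xi>\<in>D. cinner (A \<xi>) \<eta> = cinner \<xi> (adj D A \<eta>)" unfolding adj_def by (rule someI_ex)
  then show ?thesis using assms(2) by blast
qed

lemma adj_unique:
  fixes D :: "'a::chilbert_space set"
  assumes "closure D = UNIV" "\<And>\<xi>. \<xi> \<in> D \<Longrightarrow> cinner (A \<xi>) \<eta> = cinner \<xi> z"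
  shows "\<eta> \<in> adj_dom D A \<and> adj D A \<eta> = z"
proof
  show dom: "\<eta> \<in> adj_dom D A" unfolding adj_dom_def using assms(2) by blast
  have "cinner \<xi> (adj D A \<eta> - z) = 0" if "\<xi> \<in> D" for \<xi>
    using adj_prop[OF dom that] assms(2)[OF that] by (simp add: cinner_diff_right)
  then have "adj D A \<eta> - z = 0" by (rule dense_orth[OF assms(1)])
  then show "adj D A \<eta> = z" by simp
qed

lemma sa_intro:
  fixes DT :: "'a::chilbert_space set"
  assumes "lin_op DT T" "closure DT = UNIV"
    and sym: "\<And>\<xi> \<eta>. \<xi> \<in> DT \<Longrightarrow> \<eta> \<in> DT \<Longrightarrow> cinner (T \<xi>) \<eta> = cinner \<xi> (T \<eta>)"
    and max: "\<And>\<eta> z. (\<And>\<xi>. \<xi> \<in> DT \<Longrightarrow> cinner (T \<xi>) \<eta> = cinner \<xi> z) \<Longrightarrow> \<eta> \<in> DT"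
  shows "self_adjoint_op DT T"
  unfolding self_adjoint_op_def densely_defined_def
proof (intro conjI ballI)
  show "lin_op DT T" "closure DT = UNIV" by fact+
  show "adj_dom DT T = DT"
  proof
    show "adj_dom DT T \<subseteq> DT"
    proof
      fix \<eta> assume "\<eta> \<in> adj_dom DT T"
      then show "\<eta> \<in> DT" using adj_prop max by blast
    qed
    show "DT \<subseteq> adj_dom DT T" using sym unfolding adj_dom_def by blast
  qed
  fix \<eta> assume "\<eta> \<in> DT"
  then show "adj DT T \<eta> = T \<eta>" using adj_unique[OF assms(2), of T \<eta> "T \<eta>"] sym by blast
qed

lemma sa_lin: "self_adjoint_op DT T \<Longrightarrow> lin_op DT T"
  by (simp add: self_adjoint_op_def densely_defined_def)

lemma sa_dense: "self_adjoint_op DT T \<Longrightarrow> closure DT = UNIV"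
  by (simp add: self_adjoint_op_def densely_defined_def)

lemma sa_symm:
  assumes "self_adjoint_op DT T" "\<xi> \<in> DT" "\<eta> \<in> DT"
  shows "cinner (T \<xi>) \<eta> = cinner \<xi> (T \<eta>)"
  using adj_prop[of \<eta> DT T \<xi>] assms unfolding self_adjoint_op_def by auto

lemma sa_max:
  fixes DT :: "'a::chilbert_space set"
  assumes "self_adjoint_op DT T" "\<And>\<xi>. \<xi> \<in> DT \<Longrightarrow> cinner (T \<xi>) \<eta> = cinner \<xi> z"
  shows "\<eta> \<in> DT \<and> T \<eta> = z"
  using adj_unique[OF sa_dense[OF assms(1)] assms(2)] assms(1) unfolding self_adjoint_op_def by auto

lemma sa_closed:
  fixes DT :: "'a::chilbert_space set"
  assumes "self_adjoint_op DT T" "\<And>n. Y n \<in> DT" "Y \<longlonglongrightarrow> y" "(\<lambda>n. T (Y n)) \<longlonglongrightarrow> z"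
  shows "y \<in> DT \<and> T y = z"
proof (rule sa_max[OF assms(1)])
  fix u assume u: "u \<in> DT"
  have l1: "(\<lambda>n. cinner (T u) (Y n)) \<longlonglongrightarrow> cinner (T u) y" by (rule tendsto_cinner[OF tendsto_const assms(3)])
  have l2: "(\<lambda>n. cinner u (T (Y n))) \<longlonglongrightarrow> cinner u z" by (rule tendsto_cinner[OF tendsto_const assms(4)])
  have "(\<lambda>n. cinner (T u) (Y n)) = (\<lambda>n. cinner u (T (Y n)))" using sa_symm[OF assms(1) u assms(2)] by simp
  then show "cinner (T u) y = cinner u z" using l1 l2 LIMSEQ_unique by metis
qed

lemma sa_norm_id:
  assumes "self_adjoint_op DT T" "y \<in> DT"
  shows "(norm (T y - (\<i> * complex_of_real s) *\<^sub>C y))^2 = (norm (T y))^2 + s^2 * (norm y)^2"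
proof -
  define l where "l = \<i> * complex_of_real s"
  have sy: "cinner y (T y) = cinner (T y) y" using sa_symm[OF assms(1) assms(2) assms(2)] by simp
  have "cinner (T y - l *\<^sub>C y) (T y - l *\<^sub>C y) = cinner (T y) (T y) - cnj l * cinner (T y) y - l * cinner y (T y) + l * cnj l * cinner y y"
    by (rule herm_form.expand[OF herm_cinner])
  also have "\<dots> = cinner (T y) (T y) + complex_of_real (s^2) * cinner y y"
    unfolding sy l_def by (simp add: algebra_simps power2_eq_square)
  finally have "cinner (T y - l *\<^sub>C y) (T y - l *\<^sub>C y) = complex_of_real ((norm (T y))^2 + s^2 * (norm y)^2)"
    by (simp add: cinner_self_norm)
  then show ?thesis unfolding l_def using Re_cinner_self[of "T y - (\<i> * complex_of_real s) *\<^sub>C y"] by simp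
qed

lemma sa_range:
  fixes DT :: "'a::chilbert_space set"
  assumes sa: "self_adjoint_op DT T" and s: "s \<noteq> 0"
  shows "\<exists>y\<in>DT. T y - (\<i> * complex_of_real s) *\<^sub>C y = w"
proof -
  define l where "l = \<i> * complex_of_real s"
  have lin: "lin_op DT T" by (rule sa_lin[OF sa])
  define M where "M = {T y - l *\<^sub>C y | y. y \<in> DT}"
  have csM: "csub M" unfolding csub_def M_def
  proof (intro conjI ballI allI)
    show "0 \<in> {T y - l *\<^sub>C y |y. y \<in> DT}" using lin_op_zero[OF lin] by (intro CollectI exI[of _ 0]) simp
  next
    fix a b assume "a \<in> {T y - l *\<^sub>C y |y. y \<in> DT}" "b \<in> {T y - l *\<^sub>C y |y. y \<in> DT}"
    then obtain ya yb where "a = T ya - l *\<^sub>C ya" "ya \<in> DT" "b = T yb - l *\<^sub>C yb" "yb \<in> DT" by blast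
    then show "a + b \<in> {T y - l *\<^sub>C y |y. y \<in> DT}"
      using lin_op_add[OF lin, of ya yb] by (intro CollectI exI[of _ "ya + yb"]) (simp add: scaleC_add_right algebra_simps)
  next
    fix c a assume "a \<in> {T y - l *\<^sub>C y |y. y \<in> DT}"
    then obtain ya where "a = T ya - l *\<^sub>C ya" "ya \<in> DT" by blast
    then show "c *\<^sub>C a \<in> {T y - l *\<^sub>C y |y. y \<in> DT}"
      using lin_op_scaleC[OF lin, of ya c]
      by (intro CollectI exI[of _ "c *\<^sub>C ya"]) (simp add: scaleC_diff_right scaleC_scaleC mult.commute)
  qed
  have est: "\<bar>s\<bar> * norm y \<le> norm (T y - l *\<^sub>C y)" if "y \<in> DT" for y
  proof -
    have "(\<bar>s\<bar> * norm y)^2 \<le> (norm (T y - l *\<^sub>C y))^2"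
      unfolding l_def sa_norm_id[OF sa that] by (simp add: power_mult_distrib)
    then show ?thesis by (simp add: power2_le_iff_abs_le)
  qed
  have clM: "closed M" unfolding closed_sequential_limits
  proof (intro allI impI)
    fix W w assume h: "(\<forall>n. W n \<in> M) \<and> W \<longlonglongrightarrow> w"
    then have "\<forall>n. \<exists>y. y \<in> DT \<and> W n = T y - l *\<^sub>C y" unfolding M_def by blast
    from choice[OF this] obtain Y where Y0: "\<forall>n. Y n \<in> DT \<and> W n = T (Y n) - l *\<^sub>C Y n" by blast
    then have Y: "\<And>n. Y n \<in> DT" "\<And>n. W n = T (Y n) - l *\<^sub>C Y n" by auto
    have CW: "Cauchy W" using h LIMSEQ_imp_Cauchy by blast
    have CY: "Cauchy Y" unfolding Cauchy_def
    proof (intro allI impI)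
      fix e :: real assume e: "0 < e"
      have es: "0 < e * \<bar>s\<bar>" using e s by simp
      obtain N where N: "\<forall>m\<ge>N. \<forall>n\<ge>N. dist (W m) (W n) < e * \<bar>s\<bar>"
        using CW es unfolding Cauchy_def by blast
      have "dist (Y m) (Y n) < e" if "m \<ge> N" "n \<ge> N" for m n
      proof -
        have d: "Y m - Y n \<in> DT" "T (Y m - Y n) = T (Y m) - T (Y n)" using lin_op_diff[OF lin Y(1) Y(1)] by auto
        have "\<bar>s\<bar> * norm (Y m - Y n) \<le> norm (T (Y m - Y n) - l *\<^sub>C (Y m - Y n))" by (rule est[OF d(1)])
        also have "T (Y m - Y n) - l *\<^sub>C (Y m - Y n) = W m - W n"
          unfolding d(2) Y(2) by (simp add: scaleC_diff_right algebra_simps)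
        also have "norm (W m - W n) < e * \<bar>s\<bar>" using N that by (simp add: dist_norm)
        finally have "\<bar>s\<bar> * norm (Y m - Y n) < e * \<bar>s\<bar>" .
        then show ?thesis using s by (simp add: dist_norm mult.commute)
      qed
      then show "\<exists>N. \<forall>m\<ge>N. \<forall>n\<ge>N. dist (Y m) (Y n) < e" by blast
    qed
    then obtain y where y: "Y \<longlonglongrightarrow> y" using Cauchy_convergent_iff convergent_def by blast
    have "(\<lambda>n. W n + l *\<^sub>C Y n) \<longlonglongrightarrow> w + l *\<^sub>C y" using h by (intro tendsto_add tendsto_scaleC y) auto
    moreover have "(\<lambda>n. W n + l *\<^sub>C Y n) = (\<lambda>n. T (Y n))" using Y(2) by simp
    ultimately have "(\<lambda>n. T (Y n)) \<longlonglongrightarrow> w + l *\<^sub>C y" by simp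
    then have "y \<in> DT \<and> T y = w + l *\<^sub>C y" by (rule sa_closed[OF sa Y(1) y])
    then show "w \<in> M" unfolding M_def by (intro CollectI exI[of _ y]) simp
  qed
  have orth: "v = 0" if v: "\<And>m. m \<in> M \<Longrightarrow> cinner m v = 0" for v
  proof -
    have "cinner (T \<xi>) v = cinner \<xi> (cnj l *\<^sub>C v)" if "\<xi> \<in> DT" for \<xi>
    proof -
      have "cinner (T \<xi> - l *\<^sub>C \<xi>) v = 0" using v that unfolding M_def by blast
      then show ?thesis by (simp add: cinner_diff_left cinner_scaleC_left cinner_scaleC_right)
    qed
    then have vD: "v \<in> DT \<and> T v = cnj l *\<^sub>C v" by (rule sa_max[OF sa])
    have "cinner (T v) v = cinner v (T v)" using sa_symm[OF sa] vD by blast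
    then have "cnj l * cinner v v = l * cinner v v" using vD by (simp add: cinner_scaleC_left cinner_scaleC_right)
    then have "(cnj l - l) * cinner v v = 0" by (simp add: algebra_simps)
    moreover have "cnj l - l \<noteq> 0" unfolding l_def using s by (simp add: complex_eq_iff)
    ultimately have "cinner v v = 0" by simp
    then show ?thesis using cinner_eq_zero_iff by blast
  qed
  have "M = UNIV" by (rule closed_sub_full[OF csM clM orth])
  then have "w \<in> M" by simp
  then show ?thesis unfolding M_def l_def by blast
qed

lemma lin_op_UNIV: "lin_op UNIV f \<longleftrightarrow> lino f"
  unfolding lin_op_def lino_def by auto

lemma sa_UNIV:
  fixes S :: "'a::chilbert_space \<Rightarrow> 'a"
  assumes "lino S"
  shows "self_adjoint_op UNIV S \<longleftrightarrow> symm S"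
proof
  assume "self_adjoint_op UNIV S"
  then show "symm S" unfolding symm_def using sa_symm by blast
next
  assume "symm S"
  then show "self_adjoint_op UNIV S"
    by (intro sa_intro) (auto simp: lin_op_UNIV assms symm_def)
qed

lemma bm_facts:
  fixes G :: "'a::chilbert_space \<Rightarrow> 'a"
  assumes "bounded_metric_op G"
  shows "lino G" "\<exists>K. \<forall>x. norm (G x) \<le> norm x * K" "symm G" "posop G"
    "\<And>x. cinner (G x) x = 0 \<Longrightarrow> x = 0"
proof -
  show l: "lino G" using assms by (simp add: bounded_metric_op_def bounded_clinear_op_def lin_op_UNIV)
  show "\<exists>K. \<forall>x. norm (G x) \<le> norm x * K" using assms by (simp add: bounded_metric_op_def bounded_clinear_op_def)
  show "symm G" using assms sa_UNIV[OF l] by (simp add: bounded_metric_op_def)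
  show "posop G" unfolding posop_def
  proof
    fix x
    show "Im (cinner (G x) x) = 0 \<and> 0 \<le> Re (cinner (G x) x)"
    proof (cases "x = 0")
      case True then show ?thesis by (simp add: lino_zero[OF l])
    next
      case False then show ?thesis using assms by (auto simp: bounded_metric_op_def intro: less_imp_le)
    qed
  qed
  fix x assume "cinner (G x) x = 0"
  then have "Re (cinner (G x) x) = 0" by simp
  then show "x = 0" using assms unfolding bounded_metric_op_def by force
qed

lemma sqrt_facts:
  fixes G :: "'a::chilbert_space \<Rightarrow> 'a"
  assumes "bounded_metric_op G"
  shows "lino (op_sqrt G)" "symm (op_sqrt G)" "\<And>x. op_sqrt G (op_sqrt G x) = G x"
    "\<exists>K. \<forall>x. norm (op_sqrt G x) \<le> norm x * K"
proof -
  note bf = bm_facts[OF assms]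
  obtain K where K: "\<And>x. norm (G x) \<le> norm x * K" using bf(2) by blast
  define P where "P S = (bounded_clinear_op S \<and> self_adjoint_op UNIV S
      \<and> (\<forall>x. Im (cinner (S x) x) = 0 \<and> Re (cinner (S x) x) \<ge> 0) \<and> S \<circ> S = G)" for S :: "'a \<Rightarrow> 'a"
  have eq: "P S \<longleftrightarrow> (lino S \<and> (\<exists>K. \<forall>x. norm (S x) \<le> norm x * K) \<and> symm S \<and> posop S \<and> S \<circ> S = G)" for S
    unfolding P_def bounded_clinear_op_def lin_op_UNIV posop_def using sa_UNIV[of S] by auto
  have "\<exists>!S. P S" unfolding eq by (rule sqrt_exists_unique[OF bf(1) bf(3) bf(4) K])
  then have "P (THE S. P S)" by (rule theI')
  moreover have "op_sqrt G = (THE S. P S)" unfolding op_sqrt_def P_def by simp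
  ultimately have "P (op_sqrt G)" by simp
  then show "lino (op_sqrt G)" "symm (op_sqrt G)" "\<And>x. op_sqrt G (op_sqrt G x) = G x"
    "\<exists>K. \<forall>x. norm (op_sqrt G x) \<le> norm x * K"
    unfolding eq by (auto simp: fun_eq_iff)
qed

lemma J_facts:
  assumes "is_G_completion G J"
  shows "\<And>x y. J (x + y) = J x + J y" "\<And>c x. J (c *\<^sub>C x) = c *\<^sub>C J x"
    "\<And>x y. cinner (J x) (J y) = cinner (G x) y" "closure (range J) = UNIV"
    "\<And>x y. J (x - y) = J x - J y" "J 0 = 0"
proof -
  show a: "\<And>x y. J (x + y) = J x + J y" and s: "\<And>c x. J (c *\<^sub>C x) = c *\<^sub>C J x"
    and "\<And>x y. cinner (J x) (J y) = cinner (G x) y" "closure (range J) = UNIV"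
    using assms by (auto simp: is_G_completion_def)
  show z: "J 0 = 0" using s[of 0 0] by simp
  fix x y
  have "J (- y) = - J y" using s[of "-1" y] by (simp add: scaleC_minus_left scaleC_one)
  then show "J (x - y) = J x - J y" using a[of x "- y"] by (simp add: diff_conv_add_uminus del: add_uminus_conv_diff)
qed

lemma lin_conj:
  fixes S :: "'a::complex_vector \<Rightarrow> 'b::complex_vector"
  assumes lin: "lin_op D A" and add: "\<And>x y. S (x + y) = S x + S y"
    and sc: "\<And>c x. S (c *\<^sub>C x) = c *\<^sub>C S x" and inj: "inj S"
  shows "lin_op (S ` D) (\<lambda>\<eta>. S (A (inv S \<eta>)))"
  unfolding lin_op_def
proof (intro conjI ballI allI)
  have S0: "S 0 = 0" using sc[of 0 0] by simp
  show "0 \<in> S ` D" using lin_op_zero[OF lin] S0 by (metis image_eqI)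
  fix x y assume x: "x \<in> S ` D" and y: "y \<in> S ` D"
  then obtain x0 y0 where xy: "x = S x0" "x0 \<in> D" "y = S y0" "y0 \<in> D" by blast
  have e: "x + y = S (x0 + y0)" using xy add by simp
  show "x + y \<in> S ` D" using e lin_op_add[OF lin xy(2) xy(4)] by blast
  have i: "inv S (x + y) = x0 + y0" unfolding e by (rule inv_f_f[OF inj])
  have b: "inv S x = x0" "inv S y = y0" using xy inv_f_f[OF inj] by auto
  show "S (A (inv S (x + y))) = S (A (inv S x)) + S (A (inv S y))"
    unfolding i b using lin_op_add[OF lin xy(2) xy(4)] add by simp
next
  fix c x assume x: "x \<in> S ` D"
  then obtain x0 where xy: "x = S x0" "x0 \<in> D" by blast
  have e: "c *\<^sub>C x = S (c *\<^sub>C x0)" using xy sc by simp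
  show "c *\<^sub>C x \<in> S ` D" using e lin_op_scaleC[OF lin xy(2)] by blast
  have i: "inv S (c *\<^sub>C x) = c *\<^sub>C x0" unfolding e by (rule inv_f_f[OF inj])
  have b: "inv S x = x0" using xy inv_f_f[OF inj] by auto
  show "S (A (inv S (c *\<^sub>C x))) = c *\<^sub>C S (A (inv S x))"
    unfolding i b using lin_op_scaleC[OF lin xy(2)] sc by simp
qed

lemma csub_lin_op: "lin_op D A \<Longrightarrow> csub D"
  unfolding lin_op_def csub_def by blast

locale setting =
  fixes D :: "'a::chilbert_space set" and A G :: "'a \<Rightarrow> 'a" and J :: "'a \<Rightarrow> 'b::chilbert_space"
  assumes dd: "densely_defined D A" and bm: "bounded_metric_op G" and gc: "is_G_completion G J"
begin

abbreviation "S \<equiv> op_sqrt G"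

lemmas sf = sqrt_facts[OF bm]
lemmas bf = bm_facts[OF bm]
lemmas jf = J_facts[OF gc]

lemma linA: "lin_op D A" using dd by (simp add: densely_defined_def)
lemma denseD: "closure D = UNIV" using dd by (simp add: densely_defined_def)

lemma S_zero_imp: "S w = 0 \<Longrightarrow> w = 0"
proof -
  assume "S w = 0"
  then have "G w = 0" using sf(3)[of w] lino_zero[OF sf(1)] by simp
  then show "w = 0" using bf(5)[of w] by simp
qed

lemma injS: "inj S"
proof (rule injI)
  fix x y assume "S x = S y"
  then have "S (x - y) = 0" by (simp add: lino_diff[OF sf(1)])
  then have "x - y = 0" by (rule S_zero_imp)
  then show "x = y" by simp
qed

lemma invS: "inv S (S x) = x" by (rule inv_f_f[OF injS])

lemma J_zero_imp: "J w = 0 \<Longrightarrow> w = 0"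
  using jf(3)[of w w] bf(5)[of w] by simp

lemma injJ: "inj J"
proof (rule injI)
  fix x y assume "J x = J y"
  then have "J (x - y) = 0" by (simp add: jf(5))
  then have "x - y = 0" by (rule J_zero_imp)
  then show "x = y" by simp
qed

lemma invJ: "inv J (J x) = x" by (rule inv_f_f[OF injJ])

lemma symG: "cinner (G a) b = cinner a (G b)" using bf(3) by (simp add: symm_def)
lemma symS: "cinner (S a) b = cinner a (S b)" using sf(2) by (simp add: symm_def)

lemma JS: "cinner (J x) (J y) = cinner (S x) (S y)"
  by (simp add: jf(3) symS sf(3)[symmetric])

lemma normJS: "norm (J x) = norm (S x)"
proof -
  have "(norm (J x))^2 = (norm (S x))^2" using Re_cinner_self[of "J x"] Re_cinner_self[of "S x"] JS[of x x] by simp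
  then show ?thesis by (simp add: power2_eq_iff_nonneg)
qed

lemma S_surj_J_surj:
  assumes "surj S"
  shows "range J = UNIV"
proof -
  have "closed (range J)" unfolding closed_sequential_limits
  proof (intro allI impI)
    fix K k assume h: "(\<forall>n. K n \<in> range J) \<and> K \<longlonglongrightarrow> k"
    then have "\<forall>n. \<exists>x. K n = J x" by blast
    from choice[OF this] obtain X where X: "\<And>n. K n = J (X n)" by blast
    have CK: "Cauchy K" using h LIMSEQ_imp_Cauchy by blast
    have "Cauchy (\<lambda>n. S (X n))" unfolding Cauchy_def
    proof (intro allI impI)
      fix e :: real assume "0 < e"
      then obtain N where N: "\<forall>m\<ge>N. \<forall>n\<ge>N. dist (K m) (K n) < e" using CK unfolding Cauchy_def by blast
      have d: "dist (S (X m)) (S (X n)) = dist (K m) (K n)" for m n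
        unfolding X dist_norm using normJS[of "X m - X n"] by (simp add: lino_diff[OF sf(1)] jf(5))
      show "\<exists>N. \<forall>m\<ge>N. \<forall>n\<ge>N. dist (S (X m)) (S (X n)) < e" using N unfolding d by blast
    qed
    then obtain z where z: "(\<lambda>n. S (X n)) \<longlonglongrightarrow> z" using Cauchy_convergent_iff convergent_def by blast
    obtain x where zx: "z = S x" using assms by (metis surj_def)
    have "(\<lambda>n. S (X n) - S x) \<longlonglongrightarrow> 0" using z zx by (simp add: LIM_zero)
    then have "(\<lambda>n. norm (S (X n) - S x)) \<longlonglongrightarrow> 0" by (rule tendsto_norm_zero)
    moreover have "norm (S (X n) - S x) = norm (K n - J x)" for n
      unfolding X using normJS[of "X n - x"] by (simp add: lino_diff[OF sf(1)] jf(5))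
    ultimately have "(\<lambda>n. norm (K n - J x)) \<longlonglongrightarrow> 0" by simp
    then have "(\<lambda>n. K n - J x) \<longlonglongrightarrow> 0" by (rule tendsto_norm_zero_cancel)
    then have "K \<longlonglongrightarrow> J x" by (simp add: LIM_zero_iff)
    then have "k = J x" using h LIMSEQ_unique by blast
    then show "k \<in> range J" by blast
  qed
  then show ?thesis using jf(4) closure_closed by metis
qed

lemma J_surj_S_surj:
  assumes "range J = UNIV"
  shows "surj S"
proof -
  have cs: "csub (range S)" unfolding csub_def
  proof (intro conjI ballI allI)
    show "0 \<in> range S" by (rule range_eqI[of _ _ 0]) (simp add: lino_zero[OF sf(1)])
    fix a b assume "a \<in> range S" "b \<in> range S"
    then obtain a0 b0 where "a = S a0" "b = S b0" by blast
    then show "a + b \<in> range S" by (intro range_eqI[of _ _ "a0 + b0"]) (simp add: lino_add[OF sf(1)])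
  next
    fix c a assume "a \<in> range S"
    then obtain a0 where "a = S a0" by blast
    then show "c *\<^sub>C a \<in> range S" by (intro range_eqI[of _ _ "c *\<^sub>C a0"]) (simp add: lino_scaleC[OF sf(1)])
  qed
  have cl: "closed (range S)" unfolding closed_sequential_limits
  proof (intro allI impI)
    fix K k assume h: "(\<forall>n. K n \<in> range S) \<and> K \<longlonglongrightarrow> k"
    then have "\<forall>n. \<exists>x. K n = S x" by blast
    from choice[OF this] obtain X where X: "\<And>n. K n = S (X n)" by blast
    have CK: "Cauchy K" using h LIMSEQ_imp_Cauchy by blast
    have "Cauchy (\<lambda>n. J (X n))" unfolding Cauchy_def
    proof (intro allI impI)
      fix e :: real assume "0 < e"
      then obtain N where N: "\<forall>m\<ge>N. \<forall>n\<ge>N. dist (K m) (K n) < e" using CK unfolding Cauchy_def by blast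
      have d: "dist (J (X m)) (J (X n)) = dist (K m) (K n)" for m n
        unfolding X dist_norm using normJS[of "X m - X n"] by (simp add: lino_diff[OF sf(1)] jf(5))
      show "\<exists>N. \<forall>m\<ge>N. \<forall>n\<ge>N. dist (J (X m)) (J (X n)) < e" using N unfolding d by blast
    qed
    then obtain z where z: "(\<lambda>n. J (X n)) \<longlonglongrightarrow> z" using Cauchy_convergent_iff convergent_def by blast
    obtain x where zx: "z = J x" using assms by (metis rangeE UNIV_I)
    have "(\<lambda>n. J (X n) - J x) \<longlonglongrightarrow> 0" using z zx by (simp add: LIM_zero)
    then have "(\<lambda>n. norm (J (X n) - J x)) \<longlonglongrightarrow> 0" by (rule tendsto_norm_zero)
    moreover have "norm (J (X n) - J x) = norm (K n - S x)" for n
      unfolding X using normJS[of "X n - x"] by (simp add: lino_diff[OF sf(1)] jf(5))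
    ultimately have "(\<lambda>n. norm (K n - S x)) \<longlonglongrightarrow> 0" by simp
    then have "(\<lambda>n. K n - S x) \<longlonglongrightarrow> 0" by (rule tendsto_norm_zero_cancel)
    then have "K \<longlonglongrightarrow> S x" by (simp add: LIM_zero_iff)
    then have "k = S x" using h LIMSEQ_unique by blast
    then show "k \<in> range S" by blast
  qed
  have orth: "w = 0" if w: "\<And>m. m \<in> range S \<Longrightarrow> cinner m w = 0" for w
  proof -
    have "cinner (S (S w)) w = 0" using w by blast
    then have "cinner (S w) (S w) = 0" by (simp add: symS)
    then have "S w = 0" using cinner_eq_zero_iff by blast
    then show ?thesis by (rule S_zero_imp)
  qed
  show ?thesis using closed_sub_full[OF cs cl orth] by simp
qed

end

context setting
begin

abbreviation "T \<equiv> (\<lambda>\<eta>. S (A (inv S \<eta>)))"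
abbreviation "AJ \<equiv> (\<lambda>k. J (A (inv J k)))"

lemma T_S: "T (S x) = S (A x)" by (simp add: invS)
lemma AJ_J: "AJ (J x) = J (A x)" by (simp add: invJ)

lemma lin_T: "lin_op (S ` D) T"
  by (rule lin_conj[OF linA lino_add[OF sf(1)] lino_scaleC[OF sf(1)] injS])

lemma lin_AJ: "lin_op (J ` D) AJ"
  by (rule lin_conj[OF linA jf(1) jf(2) injJ])

lemma i2ii: "cond_i D A G \<Longrightarrow> cond_ii D A G"
  unfolding cond_ii_def
proof (rule sa_intro[OF lin_T])
  assume ci: "cond_i D A G"
  have GD: "G ` D = adj_dom D A" and GA: "\<And>\<xi>. \<xi> \<in> D \<Longrightarrow> adj D A (G \<xi>) = G (A \<xi>)"
    using ci by (auto simp: cond_i_def)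
  show "closure (S ` D) = UNIV"
  proof (rule dense_sub[OF csub_lin_op[OF lin_T]])
    fix w assume h: "\<And>m. m \<in> S ` D \<Longrightarrow> cinner m w = 0"
    have "cinner \<xi> (S w) = 0" if "\<xi> \<in> D" for \<xi> using h[of "S \<xi>"] that by (simp add: symS)
    then have "S w = 0" by (rule dense_orth[OF denseD])
    then show "w = 0" by (rule S_zero_imp)
  qed
  show "cinner (T \<xi>) \<eta> = cinner \<xi> (T \<eta>)" if hh: "\<xi> \<in> S ` D" "\<eta> \<in> S ` D" for \<xi> \<eta>
  proof -
    obtain x' x where xx: "\<xi> = S x'" "x' \<in> D" "\<eta> = S x" "x \<in> D" using hh by blast
    have Gx: "G x \<in> adj_dom D A" using GD xx(4) by blast
    have "cinner (T \<xi>) \<eta> = cinner (A x') (G x)" unfolding xx T_S by (simp add: symS sf(3))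
    also have "\<dots> = cinner x' (adj D A (G x))" by (rule adj_prop[OF Gx xx(2)])
    also have "\<dots> = cinner x' (G (A x))" using GA[OF xx(4)] by simp
    also have "\<dots> = cinner \<xi> (T \<eta>)" unfolding xx T_S by (simp add: symS sf(3))
    finally show ?thesis .
  qed
  show "\<eta> \<in> S ` D" if h: "\<And>\<xi>. \<xi> \<in> S ` D \<Longrightarrow> cinner (T \<xi>) \<eta> = cinner \<xi> z" for \<eta> z
  proof -
    have "cinner (A x) (S \<eta>) = cinner x (S z)" if "x \<in> D" for x
      using h[of "S x"] that by (simp add: T_S symS)
    then have "S \<eta> \<in> adj_dom D A" using adj_unique[OF denseD] by blast
    then obtain x0 where "x0 \<in> D" "S \<eta> = G x0" using GD by blast
    then have "S \<eta> = S (S x0)" by (simp add: sf(3))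
    then have "\<eta> = S x0" using injS by (simp add: inj_eq)
    then show ?thesis using \<open>x0 \<in> D\<close> by blast
  qed
qed

lemma ii2iii: "cond_ii D A G \<Longrightarrow> cond_iii D A J"
  unfolding cond_iii_def
proof (rule sa_intro[OF lin_AJ])
  assume c2: "cond_ii D A G"
  have saT: "self_adjoint_op (S ` D) T" using c2 by (simp add: cond_ii_def)
  have surjS: "surj S"
  proof -
    have "w \<in> range S" for w
    proof -
      obtain y where y: "y \<in> S ` D" "T y - (\<i> * complex_of_real 1) *\<^sub>C y = w" using sa_range[OF saT, of 1 w] by auto
      then obtain x where "y = S x" "x \<in> D" by blast
      then have "w = S (A x - \<i> *\<^sub>C x)" using y(2) by (simp add: T_S lino_diff[OF sf(1)] lino_scaleC[OF sf(1)])
      then show ?thesis by blast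
    qed
    then show ?thesis by blast
  qed
  have surjJ: "range J = UNIV" by (rule S_surj_J_surj[OF surjS])
  show "closure (J ` D) = UNIV"
  proof (rule dense_sub[OF csub_lin_op[OF lin_AJ]])
    fix k assume h: "\<And>m. m \<in> J ` D \<Longrightarrow> cinner m k = 0"
    obtain w where kw: "k = J w" using surjJ by (metis rangeE UNIV_I)
    have "cinner \<xi> (G w) = 0" if "\<xi> \<in> D" for \<xi> using h[of "J \<xi>"] that by (simp add: kw jf(3) symG)
    then have "G w = 0" by (rule dense_orth[OF denseD])
    then have "w = 0" using bf(5)[of w] by simp
    then show "k = 0" using kw jf(6) by simp
  qed
  show "cinner (AJ \<xi>) \<eta> = cinner \<xi> (AJ \<eta>)" if hh: "\<xi> \<in> J ` D" "\<eta> \<in> J ` D" for \<xi> \<eta>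
  proof -
    obtain x' x where xx: "\<xi> = J x'" "x' \<in> D" "\<eta> = J x" "x \<in> D" using hh by blast
    have "cinner (AJ \<xi>) \<eta> = cinner (T (S x')) (S x)" unfolding xx AJ_J T_S by (rule JS)
    also have "\<dots> = cinner (S x') (T (S x))" by (rule sa_symm[OF saT]) (use xx in auto)
    also have "\<dots> = cinner \<xi> (AJ \<eta>)" unfolding xx AJ_J T_S by (rule JS[symmetric])
    finally show ?thesis .
  qed
  show "\<eta> \<in> J ` D" if h: "\<And>\<xi>. \<xi> \<in> J ` D \<Longrightarrow> cinner (AJ \<xi>) \<eta> = cinner \<xi> z" for \<eta> z
  proof -
    obtain w where kw: "\<eta> = J w" using surjJ by (metis rangeE UNIV_I)
    obtain v where zv: "z = J v" using surjJ by (metis rangeE UNIV_I)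
    have "cinner (T \<xi>) (S w) = cinner \<xi> (S v)" if hh: "\<xi> \<in> S ` D" for \<xi>
    proof -
      obtain x where "\<xi> = S x" "x \<in> D" using hh by blast
      then show ?thesis using h[of "J x"] by (simp add: T_S AJ_J kw zv JS)
    qed
    then have "S w \<in> S ` D" using sa_max[OF saT] by blast
    then obtain x0 where "x0 \<in> D" "S w = S x0" by blast
    then have "w = x0" using injS by (simp add: inj_eq)
    then show ?thesis using kw \<open>x0 \<in> D\<close> by blast
  qed
qed

lemma iii2iv: "cond_iii D A J \<Longrightarrow> cond_iv D A G"
proof -
  assume c3: "cond_iii D A J"
  have saJ: "self_adjoint_op (J ` D) AJ" using c3 by (simp add: cond_iii_def)
  have surjJ: "range J = UNIV"
  proof -
    have "k \<in> range J" for k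
    proof -
      obtain y where y: "y \<in> J ` D" "AJ y - (\<i> * complex_of_real 1) *\<^sub>C y = k" using sa_range[OF saJ, of 1 k] by auto
      then obtain x where "y = J x" "x \<in> D" by blast
      then have "k = J (A x - \<i> *\<^sub>C x)" using y(2) by (simp add: AJ_J jf(5) jf(2))
      then show ?thesis by blast
    qed
    then show ?thesis by blast
  qed
  have surjS: "surj S" by (rule J_surj_S_surj[OF surjJ])
  have surjG: "y \<in> range G" for y
  proof -
    obtain a where "y = S a" using surjS by (metis surj_def)
    moreover obtain b where "a = S b" using surjS by (metis surj_def)
    ultimately have "y = G b" by (simp add: sf(3))
    then show ?thesis by blast
  qed
  have part2: "G \<xi> \<in> adj_dom D A \<and> adj D A (G \<xi>) = G (A \<xi>)" if "\<xi> \<in> D" for \<xi>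
  proof (rule adj_unique[OF denseD])
    fix x assume x: "x \<in> D"
    have "cinner (A x) (G \<xi>) = cinner (J (A x)) (J \<xi>)" by (simp add: jf(3) symG)
    also have "\<dots> = cinner (AJ (J x)) (J \<xi>)" by (simp add: AJ_J)
    also have "\<dots> = cinner (J x) (AJ (J \<xi>))" by (rule sa_symm[OF saJ]) (use x that in auto)
    also have "\<dots> = cinner x (G (A \<xi>))" by (simp add: AJ_J jf(3) symG)
    finally show "cinner (A x) (G \<xi>) = cinner x (G (A \<xi>))" .
  qed
  show "cond_iv D A G"
    unfolding cond_iv_def
  proof (intro conjI ballI)
    show "adj D A (G \<xi>) = G (A \<xi>)" if "\<xi> \<in> D" for \<xi> using part2[OF that] by blast
    show "G ` D = {\<zeta> \<in> adj_dom D A. adj D A \<zeta> \<in> range G}"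
    proof
      show "G ` D \<subseteq> {\<zeta> \<in> adj_dom D A. adj D A \<zeta> \<in> range G}" using part2 by blast
      show "{\<zeta> \<in> adj_dom D A. adj D A \<zeta> \<in> range G} \<subseteq> G ` D"
      proof
        fix \<zeta> assume "\<zeta> \<in> {\<zeta> \<in> adj_dom D A. adj D A \<zeta> \<in> range G}"
        then have zd: "\<zeta> \<in> adj_dom D A" by blast
        obtain y where zy: "\<zeta> = G y" using surjG[of \<zeta>] by blast
        obtain w where aw: "adj D A \<zeta> = G w" using surjG[of "adj D A \<zeta>"] by blast
        have "cinner (AJ \<xi>) (J y) = cinner \<xi> (J w)" if hh: "\<xi> \<in> J ` D" for \<xi>
        proof -
          obtain x where xx: "\<xi> = J x" "x \<in> D" using hh by blast
          have "cinner (AJ \<xi>) (J y) = cinner (A x) \<zeta>" unfolding xx AJ_J zy by (simp add: jf(3) symG)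
          also have "\<dots> = cinner x (adj D A \<zeta>)" by (rule adj_prop[OF zd xx(2)])
          also have "\<dots> = cinner \<xi> (J w)" unfolding aw xx by (simp add: jf(3) symG)
          finally show ?thesis .
        qed
        then have "J y \<in> J ` D" using sa_max[OF saJ] by blast
        then obtain x0 where "x0 \<in> D" "J y = J x0" by blast
        then have "y = x0" using injJ by (simp add: inj_eq)
        then show "\<zeta> \<in> G ` D" using zy \<open>x0 \<in> D\<close> by blast
      qed
    qed
  qed
qed

lemma iv2i:
  assumes "adj D A ` adj_dom D A \<subseteq> range G" "cond_iv D A G"
  shows "cond_i D A G"
proof -
  have "{\<zeta> \<in> adj_dom D A. adj D A \<zeta> \<in> range G} = adj_dom D A" using assms(1) by blast
  then show ?thesis using assms(2) unfolding cond_iv_def cond_i_def by simp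
qed

end

theorem proposition3p12:
  fixes D :: "'a::chilbert_space set" and A G :: "'a \<Rightarrow> 'a"
    and J :: "'a \<Rightarrow> 'b::chilbert_space"
  assumes "closed_op D A" and "densely_defined D A"
    and "bounded_metric_op G"
    and "is_G_completion G J"
  shows "(cond_i D A G \<longrightarrow> cond_ii D A G)
       \<and> (cond_ii D A G \<longrightarrow> cond_iii D A J)
       \<and> (cond_iii D A J \<longrightarrow> cond_iv D A G)
       \<and> (adj D A ` adj_dom D A \<subseteq> range G \<longrightarrow>
            (cond_i D A G \<longleftrightarrow> cond_ii D A G) \<and> (cond_ii D A G \<longleftrightarrow> cond_iii D A J)
            \<and> (cond_iii D A J \<longleftrightarrow> cond_iv D A G))"
proof -
  interpret st: setting D A G J
    by unfold_locales (fact assms(2), fact assms(3), fact assms(4))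
  show ?thesis using st.i2ii st.ii2iii st.iii2iv st.iv2i by blast
qed

end
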